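(* For $n\ge 0$ and a field $k$, let $V_n(k)=M_n(k)\oplus k^n\oplus (k^n)^*$ be the space of triples $\Sigma=(A,B,C)$ with $A\in M_n(k)$, $B\in k^n$ (column), $C\in (k^n)^*$ (row), with $GL_n(k)$ acting by $g\cdot(A,B,C)=(gAg^{-1},gB,Cg^{-1})$. Call $\Sigma$ completely controllable if the $n\times n$ matrix $[B\ AB\ \cdots\ A^{n-1}B]$ is invertible, and completely observable if the $n\times n$ matrix with rows $C, CA,\dots,CA^{n-1}$ is invertible. Let $\mathrm{sys}^{cc}_n$ and $\mathrm{sys}^{co}_n$ be the orbit spaces of the completely controllable, resp. completely observable, triples, and $\overline{M}$ the disjoint union over $n\ge0$ of $\mathrm{sys}^{cc}_n\cup\mathrm{sys}^{co}_n$. Then $\overline{M}$ is of $\mathbb{F}_1$-type: for every finite field $\mathbb{F}_q$, the number of $\mathbb{F}_q$-points of $\mathrm{sys}^{cc}_n\cup\mathrm{sys}^{co}_n$ is $q^{2n}+q^{2n-1}$ for $n\ge1$ (and $1$ for $n=0$), so that $\#\overline{M}(\mathbb{F}_q)=\sum_{k\ge0}q^k$; consequently its $\mathbb{F}_1$-motive is $\prod_{k=0}^{\infty}\frac{s-k}{2\pi}$.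
   Context: The $\mathbb{F}_q$-points of these orbit spaces are the $GL_n(\mathbb{F}_q)$-orbits of triples over $\mathbb{F}_q$ that are completely controllable or completely observable. A variety (or countable disjoint union of varieties) $X$ is of $\mathbb{F}_1$-type if there are integers $a_k$ with $\#X(\mathbb{F}_q)=\sum_k a_kq^k$ for all finite fields $\mathbb{F}_q$; its (Manin) $\mathbb{F}_1$-motive is then $\prod_k\left(\frac{s-k}{2\pi}\right)^{a_k}$ (e.g. the motive of $\mathbb{A}^n$ is $\frac{s-n}{2\pi}$ and that of $\mathbb{P}^n$ is $\prod_{k=0}^n\frac{s-k}{2\pi}$). *)

theory Defs
  imports "Jordan_Normal_Form.Matrix"
begin

definition triples :: "nat \<Rightarrow> ('a::field mat \<times> 'a mat \<times> 'a mat) set" where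
  "triples n = {(A,B,C). A \<in> carrier_mat n n \<and> B \<in> carrier_mat n 1 \<and> C \<in> carrier_mat 1 n}"

definition ctrb_mat :: "nat \<Rightarrow> 'a::field mat \<Rightarrow> 'a mat \<Rightarrow> 'a mat" where
  "ctrb_mat n A B = mat n n (\<lambda>(i,j). (A ^\<^sub>m j * B) $$ (i,0))"

definition obsv_mat :: "nat \<Rightarrow> 'a::field mat \<Rightarrow> 'a mat \<Rightarrow> 'a mat" where
  "obsv_mat n A C = mat n n (\<lambda>(i,j). (C * A ^\<^sub>m i) $$ (0,j))"

definition completely_controllable :: "nat \<Rightarrow> 'a::field mat \<times> 'a mat \<times> 'a mat \<Rightarrow> bool" where
  "completely_controllable n \<Sigma> = (case \<Sigma> of (A,B,C) \<Rightarrow> invertible_mat (ctrb_mat n A B))"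

definition completely_observable :: "nat \<Rightarrow> 'a::field mat \<times> 'a mat \<times> 'a mat \<Rightarrow> bool" where
  "completely_observable n \<Sigma> = (case \<Sigma> of (A,B,C) \<Rightarrow> invertible_mat (obsv_mat n A C))"

definition cc_or_co :: "nat \<Rightarrow> ('a::field mat \<times> 'a mat \<times> 'a mat) set" where
  "cc_or_co n = {\<Sigma> \<in> triples n. completely_controllable n \<Sigma> \<or> completely_observable n \<Sigma>}"

definition gl_orbit_rel :: "nat \<Rightarrow> ('a::field mat \<times> 'a mat \<times> 'a mat) rel" where
  "gl_orbit_rel n = {((A,B,C),(A',B',C')).
     \<exists>g h. g \<in> carrier_mat n n \<and> h \<in> carrier_mat n n \<and> g * h = 1\<^sub>m n \<and> h * g = 1\<^sub>m n \<and>
       A' = g * A * h \<and> B' = g * B \<and> C' = C * h}"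

text \<open>Number of F_q-points of sys^cc_n \<union> sys^co_n: number of GL_n(F_q)-orbits.\<close>
definition num_orbits :: "'a::{field,finite} itself \<Rightarrow> nat \<Rightarrow> nat" where
  "num_orbits _ n = card ((cc_or_co n :: ('a mat \<times> 'a mat \<times> 'a mat) set) // gl_orbit_rel n)"

end

theory Submission
  imports Defs "Jordan_Normal_Form.Determinant" "HOL-Computational_Algebra.Polynomial_Factorial"
begin


lemma poly_bezout:
  fixes p c :: "'a::field poly"
  shows "\<exists>d u v. d dvd p \<and> d dvd c \<and> d = u*p + v*c"
proof (induction c arbitrary: p rule: measure_induct_rule[where f="\<lambda>c. if c = 0 then 0 else Suc (degree c)"])
  case (less c)
  show ?case
  proof (cases "c = 0")
    case True then show ?thesis by (intro exI[of _ p] exI[of _ 1] exI[of _ 0]) auto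
  next
    case False
    have "(if p mod c = 0 then 0 else Suc (degree (p mod c))) < (if c = 0 then 0 else Suc (degree c))"
      using degree_mod_less[of c p] False by auto
    from less[OF this, of c] obtain d u v where d: "d dvd c" "d dvd p mod c" "d = u*c + v*(p mod c)" by blast
    have pm: "p mod c = p - (p div c) * c" by (simp add: minus_div_mult_eq_mod)
    have "d dvd p" using d(1,2) by (simp add: dvd_mod_iff)
    moreover have "d = v*p + (u - v*(p div c))*c" using d(3) unfolding pm by (simp add: right_diff_distrib left_diff_distrib distrib_left mult.assoc mult.commute mult.left_commute)
    ultimately show ?thesis using d(1) by blast
  qed
qed

lemma poly_coprime_bezout:
  fixes p c :: "'a::field poly"
  assumes "coprime p c" shows "\<exists>u v. u*p + v*c = 1"
proof -
  obtain d u v where d: "d dvd p" "d dvd c" "d = u*p + v*c" using poly_bezout by blast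
  have "is_unit d" using assms d(1,2) by (simp add: coprime_common_divisor)
  then obtain k where "1 = d * k" by (auto elim: dvdE)
  then have "(u*k)*p + (v*k)*c = 1" using d(3) by (simp add: distrib_left distrib_right mult.assoc mult.commute mult.left_commute)
  then show ?thesis by blast
qed

lemma poly_coprime_dvd_mult:
  fixes p c f :: "'a::field poly"
  assumes "coprime p c" "p dvd c * f" shows "p dvd f"
proof -
  obtain u v where uv: "u*p + v*c = 1" using poly_coprime_bezout[OF assms(1)] by blast
  have "f = (u*f)*p + v*(c*f)" proof -
    have "f = (u*p + v*c) * f" using uv by simp
    also have "\<dots> = (u*f)*p + v*(c*f)" by (simp add: ring_distribs mult.commute mult.left_commute)
    finally show ?thesis .
  qed
  moreover have "p dvd (u*f)*p + v*(c*f)" using assms(2) by simp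
  ultimately show ?thesis by simp
qed

lemma monic_assoc:
  fixes a b :: "'a::field poly"
  assumes "lead_coeff a = 1" "lead_coeff b = 1" "a dvd b" "b dvd a"
  shows "a = b"
proof -
  obtain k where k: "b = a * k" using assms(3) by (auto elim: dvdE)
  have a0: "a \<noteq> 0" and b0: "b \<noteq> 0" using assms(1,2) by auto
  have k0: "k \<noteq> 0" using k b0 by auto
  have "degree a \<le> degree b" "degree b \<le> degree a"
    using dvd_imp_degree_le assms(3,4) a0 b0 by auto
  then have "degree k = 0" using k degree_mult_eq[OF a0 k0] by simp
  moreover have "lead_coeff k = 1" using k assms(1,2) by (simp add: lead_coeff_mult)
  ultimately have "k = 1"
  proof -
    assume "degree k = 0" "lead_coeff k = 1"
    then obtain a where "k = [:a:]" by (auto elim: degree_eq_zeroE)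
    with \<open>lead_coeff k = 1\<close> show "k = 1" by (simp add: one_pCons)
  qed
  then show ?thesis using k by simp
qed

definition mgcd :: "'a::field poly \<Rightarrow> 'a poly \<Rightarrow> 'a poly" where
  "mgcd p c = (SOME g. lead_coeff g = 1 \<and> g dvd p \<and> g dvd c \<and> (\<exists>u v. g = u*p + v*c))"

lemma mgcd:
  fixes p c :: "'a::field poly"
  assumes "p \<noteq> 0"
  shows "lead_coeff (mgcd p c) = 1 \<and> mgcd p c dvd p \<and> mgcd p c dvd c \<and> (\<exists>u v. mgcd p c = u*p + v*c)"
proof -
  obtain d u v where d: "d dvd p" "d dvd c" "d = u*p + v*c" using poly_bezout by blast
  have d0: "d \<noteq> 0" using d(1) assms by auto
  let ?a = "inverse (lead_coeff d)"
  have L: "lead_coeff (smult ?a d) = 1" using d0 by simp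
  have a0: "?a \<noteq> 0" using d0 by simp
  have "smult ?a d dvd p" "smult ?a d dvd c" using d(1,2) a0 by (simp_all add: smult_dvd_iff)
  moreover have "smult ?a d = smult ?a u * p + smult ?a v * c" using d(3) by (simp add: smult_add_right)
  ultimately have "\<exists>g. lead_coeff g = 1 \<and> g dvd p \<and> g dvd c \<and> (\<exists>u v. g = u*p + v*c)" using L by blast
  then show ?thesis unfolding mgcd_def by (rule someI_ex)
qed

lemma mgcd_greatest:
  fixes p c :: "'a::field poly"
  assumes "p \<noteq> 0" "e dvd p" "e dvd c" shows "e dvd mgcd p c"
  using mgcd[OF assms(1), of c] assms(2,3) by auto

lemma mgcd_unique:
  fixes p c :: "'a::field poly"
  assumes "p \<noteq> 0" "lead_coeff g = 1" "g dvd p" "g dvd c" "\<And>e. e dvd p \<Longrightarrow> e dvd c \<Longrightarrow> e dvd g"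
  shows "mgcd p c = g"
proof -
  have "mgcd p c dvd g" using mgcd[OF assms(1), of c] assms(5) by blast
  then show ?thesis using monic_assoc[of "mgcd p c" g] mgcd[OF assms(1), of c] assms(2) mgcd_greatest[OF assms(1,3,4)] by blast
qed



definition MC :: "nat \<Rightarrow> 'a::zero poly set" where "MC n = {c. \<forall>j\<ge>n. coeff c j = 0}"
definition MON :: "nat \<Rightarrow> 'a::field poly set" where "MON n = {p. lead_coeff p = 1 \<and> degree p = n}"
definition PP :: "nat \<Rightarrow> ('a::field poly \<times> 'a poly) set" where "PP n = MON n \<times> MC n"
definition CoP :: "nat \<Rightarrow> ('a::field poly \<times> 'a poly) set" where
  "CoP n = {x \<in> PP n. coprime (fst x) (snd x)}"

lemma MC_iff: "c \<in> MC n \<longleftrightarrow> (c = 0 \<or> degree c < n)"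
proof
  assume c: "c \<in> MC n"
  show "c = 0 \<or> degree c < n"
  proof (rule ccontr)
    assume "\<not> (c = 0 \<or> degree c < n)"
    then have "c \<noteq> 0" "degree c \<ge> n" by auto
    then show False using c unfolding MC_def by auto
  qed
next
  assume "c = 0 \<or> degree c < n"
  then show "c \<in> MC n" unfolding MC_def by (auto intro: coeff_eq_0)
qed

lemma card_MC:
  shows "card (MC n :: 'a::{field,finite} poly set) = card (UNIV :: 'a set) ^ n \<and> finite (MC n :: 'a poly set)"
proof -
  let ?L = "{xs :: 'a list. set xs \<subseteq> UNIV \<and> length xs = n}"
  have inj: "inj_on Poly ?L"
  proof (rule inj_onI)
    fix xs ys assume xs: "xs \<in> ?L" and ys: "ys \<in> ?L" and e: "Poly xs = Poly ys"
    show "xs = ys"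
    proof (rule nth_equalityI)
      show "length xs = length ys" using xs ys by simp
      fix i assume "i < length xs"
      then have "coeff (Poly xs) i = xs ! i" "coeff (Poly ys) i = ys ! i"
        using xs ys by (simp_all add: coeff_Poly_eq nth_default_nth)
      then show "xs ! i = ys ! i" using e by simp
    qed
  qed
  have img: "MC n = Poly ` ?L"
  proof
    show "Poly ` ?L \<subseteq> MC n"
      by (auto simp: MC_def coeff_Poly_eq nth_default_def)
    show "MC n \<subseteq> Poly ` ?L"
    proof
      fix c :: "'a poly" assume c: "c \<in> MC n"
      have "c = Poly (map (coeff c) [0..<n])"
        by (rule poly_eqI) (use c in \<open>auto simp: coeff_Poly_eq nth_default_def MC_def\<close>)
      then show "c \<in> Poly ` ?L" by (intro image_eqI[of _ _ "map (coeff c) [0..<n]"]) auto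
    qed
  qed
  have "card (MC n :: 'a poly set) = card ?L" unfolding img by (rule card_image[OF inj])
  also have "\<dots> = card (UNIV :: 'a set) ^ n" by (rule card_lists_length_eq) simp
  finally show ?thesis unfolding img using finite_lists_length_eq[of "UNIV :: 'a set" n] by simp
qed

lemma MON_eq: "MON n = (\<lambda>c. monom 1 n + c) ` (MC n :: 'a::field poly set)"
proof
  show "(\<lambda>c. monom 1 n + c) ` MC n \<subseteq> (MON n :: 'a poly set)"
  proof
    fix p assume "p \<in> (\<lambda>c. monom 1 n + c) ` (MC n :: 'a poly set)"
    then obtain c where c: "c \<in> MC n" and p: "p = monom 1 n + c" by auto
    have cn: "coeff p n = 1" using c p by (simp add: MC_def)
    have "degree p \<le> n" using c p by (intro degree_le) (auto simp: MC_def coeff_monom)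
    moreover have "degree p \<ge> n" using cn by (intro le_degree) simp
    ultimately have "degree p = n" by simp
    then show "p \<in> MON n" using cn by (simp add: MON_def)
  qed
  show "(MON n :: 'a poly set) \<subseteq> (\<lambda>c. monom 1 n + c) ` MC n"
  proof
    fix p :: "'a poly" assume p: "p \<in> MON n"
    have "p - monom 1 n \<in> MC n" unfolding MC_def mem_Collect_eq
    proof (intro allI impI)
      fix j assume "n \<le> j"
      then show "coeff (p - monom 1 n) j = 0" using p
        by (cases "j = n") (auto simp: MON_def coeff_monom intro: coeff_eq_0)
    qed
    then show "p \<in> (\<lambda>c. monom 1 n + c) ` MC n" by (intro image_eqI[of _ _ "p - monom 1 n"]) auto
  qed
qed

lemma card_MON: "card (MON n :: 'a::{field,finite} poly set) = card (UNIV :: 'a set) ^ n \<and> finite (MON n :: 'a poly set)"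
proof -
  have "inj_on (\<lambda>c. monom 1 n + c) (MC n :: 'a poly set)" by (rule inj_onI) simp
  then show ?thesis unfolding MON_eq using card_MC[where 'a='a] by (simp add: card_image)
qed

lemma card_PP: "card (PP n :: ('a::{field,finite} poly \<times> _) set) = card (UNIV :: 'a set) ^ (2*n) \<and> finite (PP n :: ('a poly \<times> _) set)"
  unfolding PP_def using card_MON[where 'a='a] card_MC[where 'a='a]
  by (simp add: card_cartesian_product power_add mult_2)

lemma mgcd_mult_coprime:
  fixes d p' c' :: "'a::field poly"
  assumes d: "lead_coeff d = 1" and p0: "p' \<noteq> 0" and cop: "coprime p' c'"
  shows "mgcd (d*p') (d*c') = d"
proof (rule mgcd_unique)
  have "d \<noteq> 0" using d by auto
  then show "d * p' \<noteq> 0" using p0 by simp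
  show "lead_coeff d = 1" by fact
  show "d dvd d * p'" "d dvd d * c'" by simp_all
  fix e assume e: "e dvd d * p'" "e dvd d * c'"
  obtain u v where uv: "u*p' + v*c' = 1" using poly_coprime_bezout[OF cop] by blast
  have "d = u*(d*p') + v*(d*c')"
  proof -
    have "d = d * (u*p' + v*c')" using uv by simp
    also have "\<dots> = u*(d*p') + v*(d*c')" by (simp add: ring_distribs mult.commute mult.left_commute)
    finally show ?thesis .
  qed
  moreover have "e dvd u*(d*p') + v*(d*c')" using e by simp
  ultimately show "e dvd d" by simp
qed

definition phi :: "'a::field poly \<times> ('a poly \<times> 'a poly) \<Rightarrow> 'a poly \<times> 'a poly" where
  "phi = (\<lambda>(d,y). (d * fst y, d * snd y))"

lemma fiber_sub:
  fixes p c :: "'a::field poly"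
  assumes x: "(p,c) \<in> PP n" and dm: "degree (mgcd p c) = m"
  shows "\<exists>d p' c'. (p,c) = phi (d,(p',c')) \<and> d \<in> MON m \<and> (p',c') \<in> CoP (n-m)"
proof -
  have p: "lead_coeff p = 1" "degree p = n" and c: "c \<in> MC n"
    using x unfolding PP_def MON_def by auto
  have p0: "p \<noteq> 0" using p by auto
  define d where "d = mgcd p c"
  have dd: "lead_coeff d = 1" "d dvd p" "d dvd c"
    using mgcd[OF p0, of c] unfolding d_def by auto
  obtain p' where p': "p = d * p'" using dd(2) by (auto elim: dvdE)
  obtain c' where c': "c = d * c'" using dd(3) by (auto elim: dvdE)
  have d0: "d \<noteq> 0" using dd(1) by auto
  have p'0: "p' \<noteq> 0" using p' p0 by auto
  have dm': "degree d = m" using dm d_def by simp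
  have "lead_coeff p' = 1" using p(1) dd(1) unfolding p' by (simp add: lead_coeff_mult)
  moreover have "degree p' = n - m" using p(2) unfolding p' degree_mult_eq[OF d0 p'0] dm' by simp
  ultimately have p'M: "p' \<in> MON (n-m)" unfolding MON_def by simp
  have c'M: "c' \<in> MC (n-m)"
  proof (cases "c' = 0")
    case True then show ?thesis by (simp add: MC_def)
  next
    case False
    then have "c \<noteq> 0" using c' d0 by simp
    then have "degree c < n" using c by (simp add: MC_iff)
    then have "degree d + degree c' < n" using c' degree_mult_eq[OF d0 False] by simp
    then have "degree c' < n - m" using dm' by linarith
    then show ?thesis by (simp add: MC_iff)
  qed
  have cop: "coprime p' c'"
  proof (rule coprimeI)
    fix e assume e: "e dvd p'" "e dvd c'"
    then have "d * e dvd p" "d * e dvd c" unfolding p' c' by (simp_all add: mult_dvd_mono)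
    then have "d * e dvd d" using mgcd_greatest[OF p0] unfolding d_def by blast
    then have "d * e dvd d * 1" by simp
    then show "is_unit e" using d0 dvd_mult_cancel_left[of d e 1] by simp
  qed
  have "(p,c) = phi (d, (p', c'))" unfolding phi_def p' c' by simp
  moreover have "d \<in> MON m" using dd(1) dm' unfolding MON_def by simp
  moreover have "(p', c') \<in> CoP (n-m)" using p'M c'M cop unfolding CoP_def PP_def by simp
  ultimately show ?thesis by blast
qed

lemma fiber_sup:
  fixes d p' c' :: "'a::field poly"
  assumes d: "d \<in> MON m" and y: "(p',c') \<in> CoP (n-m)" and mn: "m \<le> n"
  shows "phi (d,(p',c')) \<in> PP n \<and> degree (mgcd (d*p') (d*c')) = m"
proof -
  have dl: "lead_coeff d = 1" "degree d = m" using d unfolding MON_def by auto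
  have pl: "lead_coeff p' = 1" "degree p' = n - m" "c' \<in> MC (n-m)" "coprime p' c'"
    using y unfolding CoP_def PP_def MON_def by auto
  have d0: "d \<noteq> 0" using dl by auto
  have p'0: "p' \<noteq> 0" using pl by auto
  have L: "lead_coeff (d*p') = 1" using dl pl by (simp add: lead_coeff_mult)
  have D: "degree (d*p') = n" using degree_mult_eq[OF d0 p'0] dl(2) pl(2) mn by simp
  have C: "d*c' \<in> MC n"
  proof (cases "c' = 0")
    case True then show ?thesis by (simp add: MC_def)
  next
    case False
    then have "degree c' < n - m" using pl(3) by (simp add: MC_iff)
    then have "degree (d*c') < n" using degree_mult_eq[OF d0 False] dl(2) by simp
    then show ?thesis by (simp add: MC_iff)
  qed
  have G: "mgcd (d*p') (d*c') = d" by (rule mgcd_mult_coprime[OF dl(1) p'0 pl(4)])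
  have "phi (d,(p',c')) = (d*p', d*c')" by (simp add: phi_def)
  moreover have "(d*p', d*c') \<in> PP n" using L D C by (simp add: PP_def MON_def)
  ultimately show ?thesis using G dl(2) by simp
qed

lemma fiber:
  fixes n m :: nat
  assumes mn: "m \<le> n"
  shows "{x \<in> (PP n :: ('a::field poly \<times> _) set). degree (mgcd (fst x) (snd x)) = m} = phi ` (MON m \<times> CoP (n-m))"
proof -
  have 1: "x \<in> phi ` (MON m \<times> CoP (n-m))" if "x \<in> {x \<in> (PP n :: ('a::field poly \<times> _) set). degree (mgcd (fst x) (snd x)) = m}" for x
  proof -
    have "(fst x, snd x) \<in> PP n" "degree (mgcd (fst x) (snd x)) = m" using that by auto
    from fiber_sub[OF this] obtain d p' c' where "(fst x, snd x) = phi (d,(p',c'))" "d \<in> MON m" "(p',c') \<in> CoP (n-m)"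
      by blast
    then have "x = phi (d,(p',c'))" "(d,(p',c')) \<in> MON m \<times> CoP (n-m)" by simp_all
    then show "x \<in> phi ` (MON m \<times> CoP (n-m))" by (rule image_eqI)
  qed
  have 2: "x \<in> {x \<in> (PP n :: ('a::field poly \<times> _) set). degree (mgcd (fst x) (snd x)) = m}" if xin: "x \<in> phi ` (MON m \<times> CoP (n-m))" for x
  proof -
    obtain y where y: "y \<in> MON m \<times> CoP (n-m)" "x = phi y" using xin by blast
    obtain d p' c' where yy: "y = (d,(p',c'))" by (cases y) auto
    have x: "x = phi (d,(p',c'))" and "d \<in> MON m" "(p',c') \<in> CoP (n-m)" using y yy by auto
    from fiber_sup[OF this(2,3) mn] x show ?thesis by (simp add: phi_def)
  qed
  show ?thesis using 1 2 by blast
qed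

lemma phi_inj: "inj_on phi (MON m \<times> (CoP k :: ('a::field poly \<times> _) set))"
proof (rule inj_onI)
  fix a b :: "'a poly \<times> ('a poly \<times> 'a poly)"
  assume a: "a \<in> MON m \<times> CoP k" and b: "b \<in> MON m \<times> CoP k" and e: "phi a = phi b"
  obtain d p c where a': "a = (d,(p,c))" by (cases a) auto
  obtain d2 p2 c2 where b': "b = (d2,(p2,c2))" by (cases b) auto
  have h1: "lead_coeff d = 1" "lead_coeff p = 1" "coprime p c" using a a' by (auto simp: MON_def CoP_def PP_def)
  have h2: "lead_coeff d2 = 1" "lead_coeff p2 = 1" "coprime p2 c2" using b b' by (auto simp: MON_def CoP_def PP_def)
  have e': "d*p = d2*p2" "d*c = d2*c2" using e a' b' by (auto simp: phi_def)
  have p0: "p \<noteq> 0" "p2 \<noteq> 0" using h1 h2 by auto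
  have "d = mgcd (d*p) (d*c)" using mgcd_mult_coprime[of d p c] h1 p0 by simp
  also have "\<dots> = mgcd (d2*p2) (d2*c2)" using e' by simp
  also have "\<dots> = d2" using mgcd_mult_coprime[of d2 p2 c2] h2 p0 by simp
  finally have "d = d2" .
  moreover have "d \<noteq> 0" using h1 by auto
  ultimately have "p = p2" "c = c2" using e' by auto
  then show "a = b" using a' b' \<open>d = d2\<close> by simp
qed

lemma card_CoP_rec:
  "card (PP n :: ('a::{field,finite} poly \<times> _) set) = (\<Sum>m\<le>n. card (UNIV :: 'a set) ^ m * card (CoP (n-m) :: ('a poly \<times> _) set))"
proof -
  let ?F = "\<lambda>m. {x \<in> (PP n :: ('a poly \<times> _) set). degree (mgcd (fst x) (snd x)) = m}"
  have fin: "finite (PP n :: ('a poly \<times> _) set)" using card_PP by blast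
  have bound: "degree (mgcd (fst x) (snd x)) \<le> n" if "x \<in> PP n" for x :: "'a poly \<times> 'a poly"
  proof -
    have "lead_coeff (fst x) = 1" "degree (fst x) = n" using that by (auto simp: PP_def MON_def)
    then have "fst x \<noteq> 0" by auto
    then have "mgcd (fst x) (snd x) dvd fst x" using mgcd[of "fst x" "snd x"] by blast
    then show ?thesis using dvd_imp_degree_le[of "mgcd (fst x) (snd x)" "fst x"] \<open>fst x \<noteq> 0\<close> \<open>degree (fst x) = n\<close> by simp
  qed
  have U: "(PP n :: ('a poly \<times> _) set) = (\<Union>m\<in>{..n}. ?F m)"
  proof (rule subset_antisym)
    show "(PP n :: ('a poly \<times> _) set) \<subseteq> (\<Union>m\<in>{..n}. ?F m)"
    proof
      fix x :: "'a poly \<times> 'a poly" assume x: "x \<in> PP n"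
      have "degree (mgcd (fst x) (snd x)) \<in> {..n}" using bound[OF x] by simp
      moreover have "x \<in> ?F (degree (mgcd (fst x) (snd x)))" using x by simp
      ultimately show "x \<in> (\<Union>m\<in>{..n}. ?F m)" by (rule UN_I)
    qed
    show "(\<Union>m\<in>{..n}. ?F m) \<subseteq> PP n" by blast
  qed
  have finF: "finite (?F m)" for m by (rule finite_subset[OF _ fin]) blast
  have "card (PP n :: ('a poly \<times> _) set) = card (\<Union>m\<in>{..n}. ?F m)" by (rule arg_cong[OF U])
  also have "\<dots> = (\<Sum>m\<le>n. card (?F m))"
    by (rule card_UN_disjoint) (simp, simp add: finF, blast)
  also have "\<dots> = (\<Sum>m\<le>n. card (UNIV :: 'a set) ^ m * card (CoP (n-m) :: ('a poly \<times> _) set))"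
  proof (rule sum.cong[OF refl])
    fix m assume "m \<in> {..n}"
    then have mn: "m \<le> n" by simp
    have "?F m = phi ` (MON m \<times> CoP (n-m))" by (rule fiber[OF mn])
    then have "card (?F m) = card ((MON m :: 'a poly set) \<times> (CoP (n-m) :: ('a poly \<times> _) set))" using card_image[OF phi_inj[of m "n-m", where 'a='a]] by (simp only:)
    also have "\<dots> = card (UNIV :: 'a set) ^ m * card (CoP (n-m) :: ('a poly \<times> _) set)"
      using card_MON[of m, where 'a='a] by (simp only: card_cartesian_product)
    finally show "card (?F m) = card (UNIV :: 'a set) ^ m * card (CoP (n-m) :: ('a poly \<times> _) set)" .
  qed
  finally show ?thesis .
qed



definition Rf :: "nat \<Rightarrow> nat \<Rightarrow> nat" where
  "Rf q k = (if k = 0 then 1 else q^(2*k) - q^(2*k-1))"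

lemma sum_Rf:
  assumes q: "q \<ge> 1"
  shows "(\<Sum>m\<le>n. q^m * Rf q (n-m)) = q^(2*n)"
proof (induction n)
  case 0 then show ?case by (simp add: Rf_def)
next
  case (Suc n)
  have "(\<Sum>m\<le>Suc n. q^m * Rf q (Suc n - m)) = Rf q (Suc n) + (\<Sum>m\<le>n. q^(Suc m) * Rf q (n - m))"
    by (subst sum.atMost_Suc_shift) simp
  also have "(\<Sum>m\<le>n. q^(Suc m) * Rf q (n - m)) = q * (\<Sum>m\<le>n. q^m * Rf q (n - m))"
    by (simp add: sum_distrib_left mult.assoc)
  also have "\<dots> = q^(2*n+1)" using Suc by simp
  also have "Rf q (Suc n) = q^(2*n+2) - q^(2*n+1)" by (simp add: Rf_def)
  also have "q^(2*n+2) - q^(2*n+1) + q^(2*n+1) = q^(2*n+2)"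
  proof -
    have "q^(2*n+1) \<le> q^(2*n+2)" using q by (intro power_increasing) auto
    then show ?thesis by simp
  qed
  finally show ?case by simp
qed

lemma q_ge1: "card (UNIV :: 'a::finite set) \<ge> 1"
  using finite_UNIV[where 'a='a] by (simp add: Suc_le_eq card_gt_0_iff)

lemma card_CoP:
  "card (CoP n :: ('a::{field,finite} poly \<times> _) set) = Rf (card (UNIV :: 'a set)) n"
proof (induction n rule: less_induct)
  case (less n)
  let ?q = "card (UNIV :: 'a set)"
  let ?r = "\<lambda>k. card (CoP k :: ('a poly \<times> _) set)"
  have rec: "?q^(2*n) = (\<Sum>m\<le>n. ?q^m * ?r (n-m))"
    using card_CoP_rec[of n, where 'a='a] card_PP[of n, where 'a='a] by simp
  have R: "?q^(2*n) = (\<Sum>m\<le>n. ?q^m * Rf ?q (n-m))" using sum_Rf[OF q_ge1[where 'a='a]] by simp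
  show ?case
  proof (cases n)
    case 0
    then show ?thesis using rec by (simp add: Rf_def)
  next
    case (Suc k)
    have "(\<Sum>m\<le>k. ?q^(Suc m) * ?r (k - m)) = (\<Sum>m\<le>k. ?q^(Suc m) * Rf ?q (k - m))"
    proof (rule sum.cong[OF refl])
      fix m assume "m \<in> {..k}"
      have "k - m < n" using Suc by simp
      then show "?q^(Suc m) * ?r (k - m) = ?q^(Suc m) * Rf ?q (k - m)" using less by simp
    qed
    moreover have "?q^(2*n) = ?r n + (\<Sum>m\<le>k. ?q^(Suc m) * ?r (k - m))"
      using rec unfolding Suc by (subst (asm) sum.atMost_Suc_shift) simp
    moreover have "?q^(2*n) = Rf ?q n + (\<Sum>m\<le>k. ?q^(Suc m) * Rf ?q (k - m))"
      using R unfolding Suc by (subst (asm) sum.atMost_Suc_shift) simp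
    ultimately show ?thesis by simp
  qed
qed

lemma card_nonCoP:
  "card ((PP n - CoP n) :: ('a::{field,finite} poly \<times> _) set) = (if n = 0 then 0 else card (UNIV :: 'a set) ^ (2*n-1))"
proof -
  let ?q = "card (UNIV :: 'a set)"
  have fin: "finite (PP n :: ('a poly \<times> _) set)" using card_PP by blast
  have sub: "(CoP n :: ('a poly \<times> _) set) \<subseteq> PP n" unfolding CoP_def by blast
  have "card ((PP n - CoP n) :: ('a poly \<times> _) set) = card (PP n :: ('a poly \<times> _) set) - card (CoP n :: ('a poly \<times> _) set)"
    by (rule card_Diff_subset[OF finite_subset[OF sub fin] sub])
  also have "\<dots> = ?q^(2*n) - Rf ?q n" using card_PP[of n, where 'a='a] card_CoP[of n, where 'a='a] by simp
  also have "\<dots> = (if n = 0 then 0 else ?q^(2*n-1))"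
  proof (cases "n = 0")
    case False
    have "?q^(2*n-1) \<le> ?q^(2*n)" using q_ge1[where 'a='a] by (intro power_increasing) auto
    then show ?thesis using False by (simp add: Rf_def)
  qed (simp add: Rf_def)
  finally show ?thesis .
qed



definition pmat :: "nat \<Rightarrow> 'a::field poly \<Rightarrow> 'a poly \<Rightarrow> 'a mat" where
  "pmat n p f = mat n n (\<lambda>(i,j). coeff (monom 1 i * f mod p) j)"
definition B0 :: "nat \<Rightarrow> 'a::field mat" where
  "B0 n = mat n 1 (\<lambda>(i,j). if i = n - 1 then 1 else 0)"
definition prow :: "nat \<Rightarrow> 'a::field poly \<Rightarrow> 'a mat" where
  "prow n c = mat 1 n (\<lambda>(i,j). coeff c j)"

lemma pmat_carrier[simp]: "pmat n p f \<in> carrier_mat n n" by (simp add: pmat_def)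
lemma B0_carrier[simp]: "B0 n \<in> carrier_mat n 1" by (simp add: B0_def)
lemma prow_carrier[simp]: "prow n c \<in> carrier_mat 1 n" by (simp add: prow_def)
lemma pmat_dims[simp]: "dim_row (pmat n p f) = n" "dim_col (pmat n p f) = n" by (simp_all add: pmat_def)
lemma B0_dims[simp]: "dim_row (B0 n) = n" "dim_col (B0 n) = 1" by (simp_all add: B0_def)
lemma prow_dims[simp]: "dim_row (prow n c) = 1" "dim_col (prow n c) = n" by (simp_all add: prow_def)

lemma poly_sum_mod: "(\<Sum>j\<in>A. g j) mod (p::'a::field poly) = (\<Sum>j\<in>A. g j mod p)"
  by (induction A rule: infinite_finite_induct) (simp_all add: poly_mod_add_left)

lemma poly_sum_monoms:
  assumes "\<forall>j\<ge>n. coeff s j = 0" shows "s = (\<Sum>j\<in>{0..<n}. monom (coeff s j) j)"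
proof (rule poly_eqI)
  fix m
  show "coeff s m = coeff (\<Sum>j\<in>{0..<n}. monom (coeff s j) j) m"
  proof (cases "m < n")
    case True then show ?thesis by (simp add: coeff_sum coeff_monom)
  next
    case False then show ?thesis using assms by (simp add: coeff_sum coeff_monom)
  qed
qed

lemma monom_mult_smult: "monom c j * (F::'a::field poly) = smult c (monom 1 j * F)"
proof -
  have "monom c j * F = smult c (monom 1 j) * F" by (simp only: smult_monom mult_1_right)
  also have "\<dots> = smult c (monom 1 j * F)" by (rule mult_smult_left)
  finally show ?thesis .
qed

lemma LIN:
  fixes s F p :: "'a::field poly"
  assumes "\<forall>j\<ge>n. coeff s j = 0"
  shows "(\<Sum>j\<in>{0..<n}. coeff s j * coeff (monom 1 j * F mod p) m) = coeff (s * F mod p) m"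
proof -
  define S where "S = (\<Sum>j\<in>{0..<n}. monom (coeff s j) j)"
  have sS: "s = S" unfolding S_def by (rule poly_sum_monoms[OF assms])
  have "S * F mod p = (\<Sum>j\<in>{0..<n}. monom (coeff s j) j * F) mod p"
    unfolding S_def by (simp add: sum_distrib_right)
  also have "\<dots> = (\<Sum>j\<in>{0..<n}. smult (coeff s j) (monom 1 j * F mod p))"
    unfolding poly_sum_mod by (rule sum.cong[OF refl]) (subst monom_mult_smult, rule mod_smult_left)
  finally have "coeff (S * F mod p) m = (\<Sum>j\<in>{0..<n}. coeff s j * coeff (monom 1 j * F mod p) m)"
    by (simp add: coeff_sum)
  then show ?thesis using sS by simp
qed

lemma MON_nz: "p \<in> MON n \<Longrightarrow> p \<noteq> 0" by (auto simp: MON_def)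

lemma mod_MC: assumes "p \<in> MON n" shows "f mod p \<in> MC n"
proof -
  have "f mod p = 0 \<or> degree (f mod p) < degree p" using degree_mod_less[OF MON_nz[OF assms]] by blast
  then show ?thesis using assms by (auto simp: MC_iff MON_def)
qed

lemma mod_small: assumes "p \<in> MON n" "r \<in> MC n" shows "r mod p = r"
proof (cases "r = 0")
  case False
  then have "degree r < degree p" using assms by (auto simp: MC_iff MON_def)
  then show ?thesis by (rule mod_poly_less)
qed simp

lemma MC_coeff: "r \<in> MC n \<Longrightarrow> \<forall>j\<ge>n. coeff r j = 0" by (simp add: MC_def)

lemma pmat_mult:
  assumes p: "p \<in> MON n"
  shows "pmat n p f * pmat n p g = pmat n p (f*g)"
proof (rule eq_matI)
  fix i j assume i: "i < dim_row (pmat n p (f*g))" and j: "j < dim_col (pmat n p (f*g))"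
  then have i': "i < n" and j': "j < n" by simp_all
  have "(pmat n p f * pmat n p g) $$ (i,j) = (\<Sum>k\<in>{0..<n}. coeff (monom 1 i * f mod p) k * coeff (monom 1 k * g mod p) j)"
    using i' j' by (simp add: pmat_def scalar_prod_def)
  also have "\<dots> = coeff ((monom 1 i * f mod p) * g mod p) j"
    by (rule LIN[OF MC_coeff[OF mod_MC[OF p]]])
  also have "\<dots> = coeff (monom 1 i * (f*g) mod p) j" by (simp add: mod_mult_left_eq mult.assoc)
  also have "\<dots> = pmat n p (f*g) $$ (i,j)" using i' j' by (simp add: pmat_def)
  finally show "(pmat n p f * pmat n p g) $$ (i,j) = pmat n p (f*g) $$ (i,j)" .
qed simp_all

lemma pmat_one:
  assumes p: "p \<in> MON n"
  shows "pmat n p 1 = 1\<^sub>m n"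
proof (rule eq_matI)
  fix i j assume "i < dim_row (1\<^sub>m n :: 'a mat)" "j < dim_col (1\<^sub>m n :: 'a mat)"
  then have i: "i < n" and j: "j < n" by simp_all
  have "monom 1 i mod p = (monom 1 i :: 'a poly)"
    by (rule mod_small[OF p]) (use i in \<open>simp add: MC_iff degree_monom_eq\<close>)
  then show "pmat n p 1 $$ (i,j) = 1\<^sub>m n $$ (i,j)" using i j by (simp add: pmat_def coeff_monom)
qed simp_all

lemma pmat_pow:
  assumes p: "p \<in> MON n"
  shows "pmat n p (monom 1 1) ^\<^sub>m k = pmat n p (monom 1 k)"
proof (induction k)
  case 0 then show ?case using pmat_one[OF p] by simp
next
  case (Suc k)
  have "pmat n p (monom 1 1) ^\<^sub>m Suc k = pmat n p (monom 1 k) * pmat n p (monom 1 1)" using Suc by simp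
  also have "\<dots> = pmat n p (monom 1 (Suc k))" by (simp add: pmat_mult[OF p] mult_monom)
  finally show ?case .
qed

lemma prow_mult:
  assumes p: "p \<in> MON n" and c: "c \<in> MC n"
  shows "prow n c * pmat n p f = prow n (c * f mod p)"
proof (rule eq_matI)
  fix i j assume "i < dim_row (prow n (c * f mod p))" "j < dim_col (prow n (c * f mod p))"
  then have i: "i = 0" and j: "j < n" by simp_all
  have "(prow n c * pmat n p f) $$ (i,j) = (\<Sum>k\<in>{0..<n}. coeff c k * coeff (monom 1 k * f mod p) j)"
    using i j by (simp add: pmat_def prow_def scalar_prod_def)
  also have "\<dots> = coeff (c * f mod p) j" by (rule LIN[OF MC_coeff[OF c]])
  finally show "(prow n c * pmat n p f) $$ (i,j) = prow n (c * f mod p) $$ (i,j)" using i j by (simp add: prow_def)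
qed simp_all

lemma pmat_B0:
  assumes i: "i < n"
  shows "(pmat n p f * B0 n) $$ (i,0) = coeff (monom 1 i * f mod p) (n-1)"
proof -
  have "(pmat n p f * B0 n) $$ (i,0) = (\<Sum>k\<in>{0..<n}. coeff (monom 1 i * f mod p) k * (if k = n - 1 then 1 else 0))"
    using i by (simp add: pmat_def B0_def scalar_prod_def)
  also have "\<dots> = coeff (monom 1 i * f mod p) (n-1)" using i by (simp add: if_distrib cong: if_cong)
  finally show ?thesis .
qed



lemma inv_det:
  assumes A: "(A :: 'a::field mat) \<in> carrier_mat n n"
  shows "invertible_mat A \<longleftrightarrow> det A \<noteq> 0"
proof
  assume "invertible_mat A"
  then obtain B where AB: "A * B = 1\<^sub>m (dim_row A)" and BA: "B * A = 1\<^sub>m (dim_row B)"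
    unfolding invertible_mat_def inverts_mat_def by blast
  have "dim_col B = n" using arg_cong[OF AB, of dim_col] A by simp
  moreover have "dim_row B = n" using arg_cong[OF BA, of dim_col] A by simp
  ultimately have B: "B \<in> carrier_mat n n" by auto
  have "det A * det B = 1" using det_mult[OF A B] AB A by simp
  then show "det A \<noteq> 0" by auto
next
  assume "det A \<noteq> 0"
  from det_non_zero_imp_unit[OF A this, of "()"]
  obtain B where B: "B \<in> carrier_mat n n" "B * A = 1\<^sub>m n" "A * B = 1\<^sub>m n"
    unfolding Units_def ring_mat_def by auto
  then show "invertible_mat A" using A unfolding invertible_mat_def inverts_mat_def square_mat.simps by auto
qed

lemma inv_kernel:
  assumes A: "(A :: 'a::field mat) \<in> carrier_mat n n"
  shows "invertible_mat A \<longleftrightarrow> (\<forall>v\<in>carrier_vec n. A *\<^sub>v v = 0\<^sub>v n \<longrightarrow> v = 0\<^sub>v n)"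
  unfolding inv_det[OF A] det_0_iff_vec_prod_zero_field[OF A] by blast

definition vpoly :: "nat \<Rightarrow> 'a::field vec \<Rightarrow> 'a poly" where
  "vpoly n v = (\<Sum>j\<in>{0..<n}. monom (v$j) j)"

lemma coeff_vpoly: "coeff (vpoly n v) j = (if j < n then v$j else 0)"
  by (simp add: vpoly_def coeff_sum coeff_monom)

lemma vpoly_MC: "vpoly n v \<in> MC n"
  by (simp add: MC_def coeff_vpoly)

lemma vpoly_zero:
  assumes v: "v \<in> carrier_vec n" and z: "vpoly n v = 0"
  shows "v = 0\<^sub>v n"
proof (rule eq_vecI)
  fix i assume "i < dim_vec (0\<^sub>v n :: 'a vec)"
  then have "i < n" by simp
  then have "v $ i = coeff (vpoly n v) i" by (simp add: coeff_vpoly)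
  then show "v $ i = 0\<^sub>v n $ i" using z \<open>i < n\<close> by simp
qed (use v in simp)

lemma ctrb_NF_entry:
  assumes p: "p \<in> MON n" and i: "i < n" and j: "j < n"
  shows "ctrb_mat n (pmat n p (monom 1 1)) (B0 n) $$ (i,j) = coeff (monom 1 i * monom 1 j mod p) (n-1)"
proof -
  have "ctrb_mat n (pmat n p (monom 1 1)) (B0 n) $$ (i,j) = (pmat n p (monom 1 1) ^\<^sub>m j * B0 n) $$ (i,0)"
    using i j by (simp add: ctrb_mat_def)
  also have "\<dots> = (pmat n p (monom 1 j) * B0 n) $$ (i,0)" unfolding pmat_pow[OF p] ..
  also have "\<dots> = coeff (monom 1 i * monom 1 j mod p) (n-1)" by (rule pmat_B0[OF i])
  finally show ?thesis .
qed

lemma K0_inv: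
  assumes p: "p \<in> MON n"
  shows "invertible_mat (ctrb_mat n (pmat n p (monom 1 1)) (B0 n))"
proof -
  let ?K = "ctrb_mat n (pmat n p (monom 1 1)) (B0 n)"
  have K: "?K \<in> carrier_mat n n" by (simp add: ctrb_mat_def)
  show ?thesis unfolding inv_kernel[OF K]
  proof (intro ballI impI)
    fix v :: "'a vec" assume v: "v \<in> carrier_vec n" and Kv: "?K *\<^sub>v v = 0\<^sub>v n"
    show "v = 0\<^sub>v n"
    proof (rule ccontr)
      assume nz: "v \<noteq> 0\<^sub>v n"
      define f where "f = vpoly n v"
      have f0: "f \<noteq> 0"
      proof
        assume "f = 0"
        then have "vpoly n v = 0" using f_def by simp
        then show False using vpoly_zero[OF v] nz by simp
      qed
      have fMC: "f \<in> MC n" unfolding f_def by (rule vpoly_MC)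
      define d where "d = degree f"
      have d: "d < n" using fMC f0 d_def by (simp add: MC_iff)
      define i where "i = n - 1 - d"
      have i: "i < n" using d i_def by simp
      have "(?K *\<^sub>v v) $ i = (\<Sum>j\<in>{0..<n}. ?K $$ (i,j) * v$j)"
        using i v K by (simp add: scalar_prod_def)
      also have "\<dots> = (\<Sum>j\<in>{0..<n}. coeff f j * coeff (monom 1 j * monom 1 i mod p) (n-1))"
      proof (rule sum.cong[OF refl])
        fix j assume "j \<in> {0..<n}"
        then have j: "j < n" by simp
        show "?K $$ (i,j) * v$j = coeff f j * coeff (monom 1 j * monom 1 i mod p) (n-1)"
          using ctrb_NF_entry[OF p i j] j by (simp add: f_def coeff_vpoly mult.commute)
      qed
      also have "\<dots> = coeff (f * monom 1 i mod p) (n-1)" by (rule LIN[OF MC_coeff[OF fMC]])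
      also have "f * monom 1 i mod p = f * monom 1 i"
      proof (rule mod_small[OF p])
        have "degree (f * monom 1 i) = d + i" using f0 d_def by (simp add: degree_mult_eq degree_monom_eq)
        then show "f * monom 1 i \<in> MC n" using d i_def by (simp add: MC_iff)
      qed
      also have "coeff (f * monom 1 i) (n-1) = coeff f d"
        using d i_def by (simp add: mult.commute[of f] coeff_monom_mult)
      also have "\<dots> \<noteq> 0" using f0 d_def by simp
      finally show False using Kv i by simp
    qed
  qed
qed

lemma obsv_NF_entry:
  assumes p: "p \<in> MON n" and c: "c \<in> MC n" and i: "i < n" and j: "j < n"
  shows "obsv_mat n (pmat n p (monom 1 1)) (prow n c) $$ (i,j) = coeff (c * monom 1 i mod p) j"
proof -
  have "obsv_mat n (pmat n p (monom 1 1)) (prow n c) $$ (i,j) = (prow n c * pmat n p (monom 1 1) ^\<^sub>m i) $$ (0,j)"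
    using i j by (simp add: obsv_mat_def)
  also have "\<dots> = (prow n (c * monom 1 i mod p)) $$ (0,j)" unfolding pmat_pow[OF p] prow_mult[OF p c] ..
  also have "\<dots> = coeff (c * monom 1 i mod p) j" using j by (simp add: prow_def)
  finally show ?thesis .
qed

lemma obsv_NF_kernel:
  assumes p: "p \<in> MON n" and c: "c \<in> MC n" and v: "v \<in> carrier_vec n"
  shows "(obsv_mat n (pmat n p (monom 1 1)) (prow n c))\<^sup>T *\<^sub>v v = 0\<^sub>v n \<longleftrightarrow> p dvd vpoly n v * c"
proof -
  let ?O = "obsv_mat n (pmat n p (monom 1 1)) (prow n c)"
  let ?f = "vpoly n v"
  have O: "?O \<in> carrier_mat n n" by (simp add: obsv_mat_def)
  have entry: "(?O\<^sup>T *\<^sub>v v) $ j = coeff (?f * c mod p) j" if j: "j < n" for j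
  proof -
    have "(?O\<^sup>T *\<^sub>v v) $ j = (\<Sum>i\<in>{0..<n}. ?O $$ (i,j) * v$i)"
      using j v O by (simp add: scalar_prod_def)
    also have "\<dots> = (\<Sum>i\<in>{0..<n}. coeff ?f i * coeff (monom 1 i * c mod p) j)"
    proof (rule sum.cong[OF refl])
      fix i assume "i \<in> {0..<n}"
      then have i: "i < n" by simp
      show "?O $$ (i,j) * v$i = coeff ?f i * coeff (monom 1 i * c mod p) j"
        using obsv_NF_entry[OF p c i j] i by (simp add: coeff_vpoly mult.commute)
    qed
    also have "\<dots> = coeff (?f * c mod p) j" by (rule LIN[OF MC_coeff[OF vpoly_MC]])
    finally show ?thesis .
  qed
  have "?O\<^sup>T *\<^sub>v v = 0\<^sub>v n \<longleftrightarrow> (\<forall>j<n. coeff (?f * c mod p) j = 0)"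
  proof
    assume "?O\<^sup>T *\<^sub>v v = 0\<^sub>v n"
    then show "\<forall>j<n. coeff (?f * c mod p) j = 0" using entry by (metis index_zero_vec(1))
  next
    assume z: "\<forall>j<n. coeff (?f * c mod p) j = 0"
    show "?O\<^sup>T *\<^sub>v v = 0\<^sub>v n"
    proof (rule eq_vecI)
      fix j assume "j < dim_vec (0\<^sub>v n :: 'a vec)"
      then have "j < n" by simp
      then show "(?O\<^sup>T *\<^sub>v v) $ j = 0\<^sub>v n $ j" using entry z by simp
    qed (use O in simp)
  qed
  also have "\<dots> \<longleftrightarrow> ?f * c mod p = 0"
  proof
    assume z: "\<forall>j<n. coeff (?f * c mod p) j = 0"
    show "?f * c mod p = 0"
    proof (rule poly_eqI)
      fix j show "coeff (?f * c mod p) j = coeff 0 j"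
        using z MC_coeff[OF mod_MC[OF p, of "?f * c"]] by (cases "j < n") auto
    qed
  qed simp
  also have "\<dots> \<longleftrightarrow> p dvd ?f * c" by (simp add: dvd_eq_mod_eq_0)
  finally show ?thesis .
qed

lemma obsv_NF_iff:
  assumes p: "p \<in> MON n" and c: "c \<in> MC n"
  shows "invertible_mat (obsv_mat n (pmat n p (monom 1 1)) (prow n c)) \<longleftrightarrow> coprime p c"
proof -
  let ?O = "obsv_mat n (pmat n p (monom 1 1)) (prow n c)"
  have O: "?O \<in> carrier_mat n n" by (simp add: obsv_mat_def)
  have OT: "?O\<^sup>T \<in> carrier_mat n n" using O by simp
  have "invertible_mat ?O \<longleftrightarrow> invertible_mat ?O\<^sup>T"
    unfolding inv_det[OF O] inv_det[OF OT] det_transpose[OF O] ..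
  also have "\<dots> \<longleftrightarrow> (\<forall>v\<in>carrier_vec n. p dvd vpoly n v * c \<longrightarrow> v = 0\<^sub>v n)"
    unfolding inv_kernel[OF OT] using obsv_NF_kernel[OF p c] by blast
  also have "\<dots> \<longleftrightarrow> coprime p c"
  proof
    assume H: "\<forall>v\<in>carrier_vec n. p dvd vpoly n v * c \<longrightarrow> v = 0\<^sub>v n"
    show "coprime p c"
    proof (rule ccontr)
      assume nc: "\<not> coprime p c"
      have p0: "p \<noteq> 0" using MON_nz[OF p] .
      define d where "d = mgcd p c"
      have dd: "lead_coeff d = 1" "d dvd p" "d dvd c" using mgcd[OF p0, of c] d_def by auto
      have nu: "\<not> is_unit d"
      proof
        assume u: "is_unit d"
        have "coprime p c"
        proof (rule coprimeI)
          fix e assume "e dvd p" "e dvd c"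
          then have "e dvd d" using mgcd_greatest[OF p0] d_def by blast
          then show "is_unit e" using u by (rule dvd_unit_imp_unit)
        qed
        then show False using nc by simp
      qed
      have dpos: "degree d \<noteq> 0"
      proof
        assume "degree d = 0"
        then obtain a where "d = [:a:]" by (auto elim: degree_eq_zeroE)
        then have "d = 1" using dd(1) by (simp add: one_pCons)
        then show False using nu by simp
      qed
      obtain f where f: "p = d * f" using dd(2) by (auto elim: dvdE)
      obtain c' where c': "c = d * c'" using dd(3) by (auto elim: dvdE)
      have d0: "d \<noteq> 0" using dd(1) by auto
      have f0: "f \<noteq> 0" using f p0 by auto
      have "degree p = n" using p by (simp add: MON_def)
      then have "degree f < n" using f degree_mult_eq[OF d0 f0] dpos by simp
      then have fMC: "f \<in> MC n" by (simp add: MC_iff)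
      define v where "v = vec n (coeff f)"
      have v: "v \<in> carrier_vec n" unfolding v_def by simp
      have vf: "vpoly n v = f"
        by (rule poly_eqI) (use MC_coeff[OF fMC] in \<open>simp add: coeff_vpoly v_def\<close>)
      have "f * c = p * c'" using f c' by (simp add: ac_simps)
      then have "p dvd vpoly n v * c" using vf by simp
      then have "v = 0\<^sub>v n" using H v by blast
      then have "f = 0" using vf by (simp add: vpoly_def)
      then show False using f0 by simp
    qed
  next
    assume cop: "coprime p c"
    show "\<forall>v\<in>carrier_vec n. p dvd vpoly n v * c \<longrightarrow> v = 0\<^sub>v n"
    proof (intro ballI impI)
      fix v :: "'a vec" assume v: "v \<in> carrier_vec n" and dv: "p dvd vpoly n v * c"
      have "p dvd c * vpoly n v" using dv by (simp add: mult.commute)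
      then have "p dvd vpoly n v" by (rule poly_coprime_dvd_mult[OF cop])
      then have "vpoly n v mod p = 0" by (simp add: dvd_eq_mod_eq_0)
      moreover have "vpoly n v mod p = vpoly n v" by (rule mod_small[OF p vpoly_MC])
      ultimately show "v = 0\<^sub>v n" using vpoly_zero[OF v] by simp
    qed
  qed
  finally show ?thesis .
qed



lemma pow_comm:
  assumes A: "(A :: 'a::field mat) \<in> carrier_mat n n"
  shows "A * A ^\<^sub>m k = A ^\<^sub>m k * A"
proof (induction k)
  case 0 then show ?case using A by simp
next
  case (Suc k)
  have "A * A ^\<^sub>m Suc k = A * (A ^\<^sub>m k * A)" by simp
  also have "\<dots> = (A * A ^\<^sub>m k) * A" using A by (simp add: assoc_mult_mat[of _ n n _ n _ n])
  also have "\<dots> = A ^\<^sub>m Suc k * A" using Suc by simp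
  finally show ?case .
qed

lemma conj_pow:
  assumes g: "(g :: 'a::field mat) \<in> carrier_mat n n" and h: "h \<in> carrier_mat n n"
    and A: "A \<in> carrier_mat n n" and hg: "h * g = 1\<^sub>m n" and X: "X \<in> carrier_mat n m"
  shows "(g * A * h) ^\<^sub>m k * (g * X) = g * (A ^\<^sub>m k * X)"
  using X
proof (induction k arbitrary: X)
  case 0
  then show ?case using g A h by simp
next
  case (Suc k)
  have gAh: "g * A * h \<in> carrier_mat n n" using g A h by simp
  have "(g * A * h) * (g * X) = g * (A * X)"
  proof -
    have "(g * A * h) * (g * X) = g * A * (h * (g * X))"
      using g A h Suc.prems by (simp add: assoc_mult_mat[of _ n n _ n _ m])
    also have "h * (g * X) = X" using h g Suc.prems hg by (simp add: assoc_mult_mat[symmetric, of _ n n _ n _ m])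
    also have "g * A * X = g * (A * X)" using g A Suc.prems by (simp add: assoc_mult_mat[of _ n n _ n _ m])
    finally show ?thesis .
  qed
  then have "(g * A * h) ^\<^sub>m Suc k * (g * X) = (g * A * h) ^\<^sub>m k * (g * (A * X))"
    using gAh g Suc.prems by (simp add: assoc_mult_mat[of _ n n _ n _ m])
  also have "\<dots> = g * (A ^\<^sub>m k * (A * X))" using Suc.IH[of "A * X"] A Suc.prems by simp
  also have "A ^\<^sub>m k * (A * X) = A ^\<^sub>m Suc k * X"
    using A Suc.prems by (simp add: assoc_mult_mat[of _ n n _ n _ m])
  finally show ?case .
qed

lemma ctrb_conj:
  assumes g: "(g :: 'a::field mat) \<in> carrier_mat n n" and h: "h \<in> carrier_mat n n"
    and A: "A \<in> carrier_mat n n" and hg: "h * g = 1\<^sub>m n" and B: "B \<in> carrier_mat n 1"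
  shows "ctrb_mat n (g * A * h) (g * B) = g * ctrb_mat n A B"
proof (rule eq_matI)
  fix i j assume "i < dim_row (g * ctrb_mat n A B)" "j < dim_col (g * ctrb_mat n A B)"
  then have i: "i < n" and j: "j < n" using g by (simp_all add: ctrb_mat_def)
  have "ctrb_mat n (g * A * h) (g * B) $$ (i,j) = (g * (A ^\<^sub>m j * B)) $$ (i,0)"
    using i j conj_pow[OF g h A hg B] by (simp add: ctrb_mat_def)
  also have "\<dots> = (\<Sum>k\<in>{0..<n}. g $$ (i,k) * (A ^\<^sub>m j * B) $$ (k,0))"
    using i g A B by (simp add: scalar_prod_def)
  also have "\<dots> = (g * ctrb_mat n A B) $$ (i,j)"
    using i j g by (simp add: scalar_prod_def ctrb_mat_def)
  finally show "ctrb_mat n (g * A * h) (g * B) $$ (i,j) = (g * ctrb_mat n A B) $$ (i,j)" .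
qed (use g in \<open>simp_all add: ctrb_mat_def\<close>)

definition Comp :: "nat \<Rightarrow> 'a::field mat \<Rightarrow> 'a mat" where
  "Comp n \<alpha> = mat n n (\<lambda>(i,j). if j + 1 < n then (if i = j + 1 then 1 else 0) else \<alpha> $$ (i,0))"

lemma KComp:
  assumes A: "(A :: 'a::field mat) \<in> carrier_mat n n" and B: "B \<in> carrier_mat n 1"
    and al: "\<alpha> \<in> carrier_mat n 1" and rel: "A ^\<^sub>m n * B = ctrb_mat n A B * \<alpha>"
  shows "A * ctrb_mat n A B = ctrb_mat n A B * Comp n \<alpha>"
proof (rule eq_matI)
  let ?K = "ctrb_mat n A B"
  fix i j assume "i < dim_row (?K * Comp n \<alpha>)" "j < dim_col (?K * Comp n \<alpha>)"
  then have i: "i < n" and j: "j < n" by (simp_all add: ctrb_mat_def Comp_def)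
  have "(A * ?K) $$ (i,j) = (\<Sum>k\<in>{0..<n}. A $$ (i,k) * (A ^\<^sub>m j * B) $$ (k,0))"
    using i j A by (simp add: scalar_prod_def ctrb_mat_def)
  also have "\<dots> = (A * (A ^\<^sub>m j * B)) $$ (i,0)"
    using i A B by (simp add: scalar_prod_def)
  also have "A * (A ^\<^sub>m j * B) = A ^\<^sub>m (Suc j) * B"
    using A B pow_comm[OF A, of j] by (simp add: assoc_mult_mat[symmetric, of _ n n _ n _ 1])
  finally have L: "(A * ?K) $$ (i,j) = (A ^\<^sub>m (Suc j) * B) $$ (i,0)" .
  have R: "(?K * Comp n \<alpha>) $$ (i,j) = (A ^\<^sub>m (Suc j) * B) $$ (i,0)"
  proof (cases "j + 1 < n")
    case True
    have "(?K * Comp n \<alpha>) $$ (i,j) = (\<Sum>k\<in>{0..<n}. ?K $$ (i,k) * (if k = j + 1 then 1 else 0))"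
      using i j True by (simp add: scalar_prod_def ctrb_mat_def Comp_def)
    also have "\<dots> = ?K $$ (i, j+1)" using True by (simp add: if_distrib cong: if_cong)
    also have "\<dots> = (A ^\<^sub>m (Suc j) * B) $$ (i,0)" using i True by (simp add: ctrb_mat_def)
    finally show ?thesis .
  next
    case False
    then have jn: "Suc j = n" using j by simp
    have "(?K * Comp n \<alpha>) $$ (i,j) = (\<Sum>k\<in>{0..<n}. ?K $$ (i,k) * \<alpha> $$ (k,0))"
      using i j False by (simp add: scalar_prod_def ctrb_mat_def Comp_def)
    also have "\<dots> = (?K * \<alpha>) $$ (i,0)" using i al by (simp add: scalar_prod_def ctrb_mat_def)
    also have "\<dots> = (A ^\<^sub>m (Suc j) * B) $$ (i,0)" using rel jn by simp
    finally show ?thesis .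
  qed
  show "(A * ?K) $$ (i,j) = (?K * Comp n \<alpha>) $$ (i,j)" using L R by simp
qed (use A in \<open>simp_all add: ctrb_mat_def Comp_def\<close>)

lemma inv_ex:
  assumes K: "(K :: 'a::field mat) \<in> carrier_mat n n" and inv: "invertible_mat K"
  shows "\<exists>Ki. Ki \<in> carrier_mat n n \<and> K * Ki = 1\<^sub>m n \<and> Ki * K = 1\<^sub>m n"
proof -
  obtain B where AB: "K * B = 1\<^sub>m (dim_row K)" and BA: "B * K = 1\<^sub>m (dim_row B)"
    using inv unfolding invertible_mat_def inverts_mat_def by blast
  have "dim_col B = n" using arg_cong[OF AB, of dim_col] K by simp
  moreover have "dim_row B = n" using arg_cong[OF BA, of dim_col] K by simp
  ultimately show ?thesis using AB BA K by (intro exI[of _ B]) auto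
qed

definition e0 :: "nat \<Rightarrow> 'a::field mat" where "e0 n = mat n 1 (\<lambda>(i,j). if i = 0 then 1 else 0)"

lemma e0_carrier[simp]: "e0 n \<in> carrier_mat n 1" by (simp add: e0_def)

lemma ctrb_e0:
  assumes A: "(A :: 'a::field mat) \<in> carrier_mat n n" and B: "B \<in> carrier_mat n 1"
  shows "ctrb_mat n A B * e0 n = B"
proof (rule eq_matI)
  fix i j assume "i < dim_row B" "j < dim_col B"
  then have i: "i < n" and j: "j = 0" using B by auto
  have "(ctrb_mat n A B * e0 n) $$ (i,j) = (\<Sum>k\<in>{0..<n}. ctrb_mat n A B $$ (i,k) * (if k = 0 then 1 else 0))"
    using i j by (simp add: scalar_prod_def ctrb_mat_def e0_def)
  also have "\<dots> = ctrb_mat n A B $$ (i,0)" using i by (simp add: if_distrib cong: if_cong)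
  also have "\<dots> = (A ^\<^sub>m 0 * B) $$ (i,0)" using i by (simp add: ctrb_mat_def)
  also have "A ^\<^sub>m 0 * B = B" using A B by simp
  also have "B $$ (i,0) = B $$ (i,j)" using j by simp
  finally show "(ctrb_mat n A B * e0 n) $$ (i,j) = B $$ (i,j)" .
qed (use B in \<open>simp_all add: ctrb_mat_def e0_def\<close>)



definition act :: "'a::field mat \<Rightarrow> 'a mat \<Rightarrow> 'a mat \<times> 'a mat \<times> 'a mat \<Rightarrow> 'a mat \<times> 'a mat \<times> 'a mat" where
  "act g h x = (case x of (A,B,C) \<Rightarrow> (g*A*h, g*B, C*h))"

lemma triples_iff: "(A,B,C) \<in> triples n \<longleftrightarrow> A \<in> carrier_mat n n \<and> B \<in> carrier_mat n 1 \<and> C \<in> carrier_mat 1 n"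
  by (simp add: triples_def)

lemma rel_act:
  "(x,y) \<in> gl_orbit_rel n \<longleftrightarrow> (\<exists>g h. g \<in> carrier_mat n n \<and> h \<in> carrier_mat n n \<and> g*h = 1\<^sub>m n \<and> h*g = 1\<^sub>m n \<and> y = act g h x)"
  by (cases x, cases y) (simp add: gl_orbit_rel_def act_def)

lemma act_triples:
  assumes "g \<in> carrier_mat n n" "h \<in> carrier_mat n n" "x \<in> triples n"
  shows "act g h x \<in> triples n"
  using assms by (cases x) (auto simp: act_def triples_def)

lemma act_comp:
  assumes g1: "(g1 :: 'a::field mat) \<in> carrier_mat n n" and h1: "h1 \<in> carrier_mat n n"
    and g2: "g2 \<in> carrier_mat n n" and h2: "h2 \<in> carrier_mat n n" and x: "x \<in> triples n"
  shows "act g2 h2 (act g1 h1 x) = act (g2*g1) (h1*h2) x"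
proof -
  obtain A B C where xx: "x = (A,B,C)" by (cases x)
  have A: "A \<in> carrier_mat n n" and B: "B \<in> carrier_mat n 1" and C: "C \<in> carrier_mat 1 n"
    using x xx by (auto simp: triples_def)
  have 1: "g2 * (g1 * A * h1) * h2 = g2 * g1 * A * (h1 * h2)"
    using g1 h1 g2 h2 A by (simp add: assoc_mult_mat[of _ n n _ n _ n])
  have 2: "g2 * (g1 * B) = g2 * g1 * B"
    using g1 g2 B by (simp add: assoc_mult_mat[of _ n n _ n _ 1])
  have 3: "C * h1 * h2 = C * (h1 * h2)"
    using h1 h2 C by (simp add: assoc_mult_mat[of _ 1 n _ n _ n])
  show ?thesis using 1 2 3 xx by (simp add: act_def)
qed

lemma act_one:
  assumes x: "x \<in> triples n" shows "act (1\<^sub>m n) (1\<^sub>m n) x = x"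
  using x by (cases x) (auto simp: act_def triples_def)

lemma inv_pair_comp:
  assumes g1: "(g1 :: 'a::field mat) \<in> carrier_mat n n" and h1: "h1 \<in> carrier_mat n n"
    and g2: "g2 \<in> carrier_mat n n" and h2: "h2 \<in> carrier_mat n n"
    and e1: "g1 * h1 = 1\<^sub>m n" and e2: "g2 * h2 = 1\<^sub>m n"
  shows "(g2 * g1) * (h1 * h2) = 1\<^sub>m n"
proof -
  have "(g2 * g1) * (h1 * h2) = g2 * ((g1 * h1) * h2)"
    using g1 h1 g2 h2 by (simp add: assoc_mult_mat[of _ n n _ n _ n])
  also have "\<dots> = 1\<^sub>m n" using e1 e2 left_mult_one_mat[OF h2] by simp
  finally show ?thesis .
qed

lemma rel_refl: "x \<in> triples n \<Longrightarrow> (x,x) \<in> gl_orbit_rel n"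
  unfolding rel_act by (intro exI[of _ "1\<^sub>m n"]) (simp add: act_one)

lemma rel_triples: "x \<in> triples n \<Longrightarrow> (x,y) \<in> gl_orbit_rel n \<Longrightarrow> y \<in> triples n"
  unfolding rel_act using act_triples by blast

lemma rel_sym:
  assumes x: "x \<in> triples n" and r: "(x,y) \<in> gl_orbit_rel n"
  shows "(y,x) \<in> gl_orbit_rel n"
proof -
  obtain g h where gh: "g \<in> carrier_mat n n" "h \<in> carrier_mat n n" "g*h = 1\<^sub>m n" "h*g = 1\<^sub>m n" "y = act g h x"
    using r unfolding rel_act by blast
  have "act h g y = act (h*g) (h*g) x" using gh x by (simp add: act_comp)
  also have "\<dots> = x" using gh x by (simp add: act_one)
  finally show ?thesis unfolding rel_act using gh by blast
qed

lemma rel_trans: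
  assumes x: "x \<in> triples n" and r1: "(x,y) \<in> gl_orbit_rel n" and r2: "(y,z) \<in> gl_orbit_rel n"
  shows "(x,z) \<in> gl_orbit_rel n"
proof -
  obtain g h where gh: "g \<in> carrier_mat n n" "h \<in> carrier_mat n n" "g*h = 1\<^sub>m n" "h*g = 1\<^sub>m n" "y = act g h x"
    using r1 unfolding rel_act by blast
  obtain g2 h2 where gh2: "g2 \<in> carrier_mat n n" "h2 \<in> carrier_mat n n" "g2*h2 = 1\<^sub>m n" "h2*g2 = 1\<^sub>m n" "z = act g2 h2 y"
    using r2 unfolding rel_act by blast
  have "z = act (g2*g) (h*h2) x" using gh gh2 x by (simp add: act_comp)
  moreover have "(g2*g) * (h*h2) = 1\<^sub>m n" by (rule inv_pair_comp) (use gh gh2 in auto)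
  moreover have "(h*h2) * (g2*g) = 1\<^sub>m n" by (rule inv_pair_comp) (use gh gh2 in auto)
  ultimately show ?thesis unfolding rel_act using gh gh2 by (intro exI[of _ "g2*g"] exI[of _ "h*h2"]) auto
qed

lemma class_eq:
  assumes x: "x \<in> triples n" and r: "(x,y) \<in> gl_orbit_rel n"
  shows "gl_orbit_rel n `` {x} = gl_orbit_rel n `` {y}"
proof -
  have y: "y \<in> triples n" using rel_triples[OF x r] .
  have yx: "(y,x) \<in> gl_orbit_rel n" using rel_sym[OF x r] .
  have 1: "z \<in> gl_orbit_rel n `` {y}" if "z \<in> gl_orbit_rel n `` {x}" for z
  proof -
    have "(x,z) \<in> gl_orbit_rel n" using that by simp
    then show ?thesis using rel_trans[OF y yx] by simp
  qed
  have 2: "z \<in> gl_orbit_rel n `` {x}" if "z \<in> gl_orbit_rel n `` {y}" for z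
  proof -
    have "(y,z) \<in> gl_orbit_rel n" using that by simp
    then show ?thesis using rel_trans[OF x r] by simp
  qed
  show ?thesis using 1 2 by blast
qed

lemma det_unit:
  assumes g: "(g :: 'a::field mat) \<in> carrier_mat n n" and h: "h \<in> carrier_mat n n" and gh: "g*h = 1\<^sub>m n"
  shows "det g \<noteq> 0"
proof -
  have "det g * det h = 1" using det_mult[OF g h] gh by simp
  then show ?thesis by auto
qed

lemma cc_act:
  assumes g: "g \<in> carrier_mat n n" and h: "h \<in> carrier_mat n n" and gh: "g*h = 1\<^sub>m n" and hg: "h*g = 1\<^sub>m n"
    and x: "x \<in> triples n"
  shows "completely_controllable n (act g h x) \<longleftrightarrow> completely_controllable n x"
proof -
  obtain A B C where xx: "x = (A,B,C)" by (cases x)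
  have A: "A \<in> carrier_mat n n" and B: "B \<in> carrier_mat n 1"
    using x xx by (auto simp: triples_def)
  have K: "ctrb_mat n A B \<in> carrier_mat n n" by (simp add: ctrb_mat_def)
  have "completely_controllable n (act g h x) \<longleftrightarrow> invertible_mat (g * ctrb_mat n A B)"
    using xx ctrb_conj[OF g h A hg B] by (simp add: act_def completely_controllable_def)
  also have "\<dots> \<longleftrightarrow> det g * det (ctrb_mat n A B) \<noteq> 0"
    using inv_det[of "g * ctrb_mat n A B" n] g K det_mult[OF g K] by simp
  also have "\<dots> \<longleftrightarrow> invertible_mat (ctrb_mat n A B)"
    using det_unit[OF g h gh] inv_det[OF K] by simp
  finally show ?thesis using xx by (simp add: completely_controllable_def)
qed

lemma cc_rel:
  assumes x: "x \<in> triples n" and r: "(x,y) \<in> gl_orbit_rel n"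
  shows "completely_controllable n y \<longleftrightarrow> completely_controllable n x"
  using r cc_act[OF _ _ _ _ x] unfolding rel_act by blast

definition Tr :: "'a::field mat \<times> 'a mat \<times> 'a mat \<Rightarrow> 'a mat \<times> 'a mat \<times> 'a mat" where
  "Tr x = (case x of (A,B,C) \<Rightarrow> (transpose_mat A, transpose_mat C, transpose_mat B))"

lemma Tr_triples: "x \<in> triples n \<Longrightarrow> Tr x \<in> triples n"
  by (cases x) (simp add: Tr_def triples_def)

lemma Tr_Tr: "Tr (Tr x) = x"
  by (cases x) (simp add: Tr_def)

lemma Tr_act:
  assumes g: "g \<in> carrier_mat n n" and h: "h \<in> carrier_mat n n" and x: "x \<in> triples n"
  shows "Tr (act g h x) = act (transpose_mat h) (transpose_mat g) (Tr x)"
proof -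
  obtain A B C where xx: "x = (A,B,C)" by (cases x)
  have A: "A \<in> carrier_mat n n" and B: "B \<in> carrier_mat n 1" and C: "C \<in> carrier_mat 1 n"
    using x xx by (auto simp: triples_def)
  have 1: "transpose_mat (g * A * h) = transpose_mat h * transpose_mat A * transpose_mat g"
    using g A h by (simp add: transpose_mult[of _ n n _ n] assoc_mult_mat[of _ n n _ n _ n])
  have 2: "transpose_mat (g * B) = transpose_mat B * transpose_mat g"
    using g B by (simp add: transpose_mult[of _ n n _ 1])
  have 3: "transpose_mat (C * h) = transpose_mat h * transpose_mat C"
    using h C by (simp add: transpose_mult[of _ 1 n _ n])
  show ?thesis using xx 1 2 3 by (simp add: act_def Tr_def)
qed

lemma Tr_rel:
  assumes x: "x \<in> triples n" and r: "(x,y) \<in> gl_orbit_rel n"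
  shows "(Tr x, Tr y) \<in> gl_orbit_rel n"
proof -
  obtain g h where gh: "g \<in> carrier_mat n n" "h \<in> carrier_mat n n" "g*h = 1\<^sub>m n" "h*g = 1\<^sub>m n" "y = act g h x"
    using r unfolding rel_act by blast
  have e1: "transpose_mat h * transpose_mat g = 1\<^sub>m n"
    using gh transpose_mult[of g n n h n] by (metis transpose_one)
  have e2: "transpose_mat g * transpose_mat h = 1\<^sub>m n"
    using gh transpose_mult[of h n n g n] by (metis transpose_one)
  have "Tr y = act (transpose_mat h) (transpose_mat g) (Tr x)" using Tr_act gh x by simp
  then show ?thesis unfolding rel_act using gh e1 e2
    by (intro exI[of _ "transpose_mat h"] exI[of _ "transpose_mat g"]) simp
qed

lemma transpose_pow:
  assumes A: "(A :: 'a::field mat) \<in> carrier_mat n n"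
  shows "(transpose_mat A) ^\<^sub>m k = transpose_mat (A ^\<^sub>m k)"
proof (induction k)
  case 0 then show ?case using A by simp
next
  case (Suc k)
  have "transpose_mat A ^\<^sub>m Suc k = transpose_mat (A ^\<^sub>m k) * transpose_mat A" using Suc by simp
  also have "\<dots> = transpose_mat (A * A ^\<^sub>m k)" using A by (simp add: transpose_mult[of _ n n _ n])
  also have "\<dots> = transpose_mat (A ^\<^sub>m Suc k)" using pow_comm[OF A] by simp
  finally show ?case .
qed

lemma obsv_T:
  assumes A: "(A :: 'a::field mat) \<in> carrier_mat n n" and C: "C \<in> carrier_mat 1 n"
  shows "obsv_mat n A C = transpose_mat (ctrb_mat n (transpose_mat A) (transpose_mat C))"
proof (rule eq_matI)
  fix i j assume "i < dim_row (transpose_mat (ctrb_mat n (transpose_mat A) (transpose_mat C)))"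
    "j < dim_col (transpose_mat (ctrb_mat n (transpose_mat A) (transpose_mat C)))"
  then have i: "i < n" and j: "j < n" by (simp_all add: ctrb_mat_def)
  have "transpose_mat (ctrb_mat n (transpose_mat A) (transpose_mat C)) $$ (i,j)
      = (transpose_mat (A ^\<^sub>m i) * transpose_mat C) $$ (j,0)"
    using i j A by (simp add: ctrb_mat_def transpose_pow[OF A])
  also have "\<dots> = transpose_mat (C * A ^\<^sub>m i) $$ (j,0)"
    using A C by (simp add: transpose_mult[of _ 1 n _ n])
  also have "\<dots> = (C * A ^\<^sub>m i) $$ (0,j)" using j A C by simp
  also have "\<dots> = obsv_mat n A C $$ (i,j)" using i j by (simp add: obsv_mat_def)
  finally show "obsv_mat n A C $$ (i,j) = transpose_mat (ctrb_mat n (transpose_mat A) (transpose_mat C)) $$ (i,j)" by simp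
qed (simp_all add: obsv_mat_def ctrb_mat_def)

lemma inv_T:
  assumes M: "(M :: 'a::field mat) \<in> carrier_mat n n"
  shows "invertible_mat (transpose_mat M) \<longleftrightarrow> invertible_mat M"
proof -
  have MT: "transpose_mat M \<in> carrier_mat n n" using M by simp
  show ?thesis unfolding inv_det[OF M] inv_det[OF MT] det_transpose[OF M] ..
qed

lemma co_Tr:
  assumes x: "x \<in> triples n"
  shows "completely_observable n x \<longleftrightarrow> completely_controllable n (Tr x)"
proof -
  obtain A B C where xx: "x = (A,B,C)" by (cases x)
  have A: "A \<in> carrier_mat n n" and C: "C \<in> carrier_mat 1 n"
    using x xx by (auto simp: triples_def)
  have K: "ctrb_mat n (transpose_mat A) (transpose_mat C) \<in> carrier_mat n n" by (simp add: ctrb_mat_def)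
  show ?thesis using xx obsv_T[OF A C] inv_T[OF K]
    by (simp add: completely_observable_def completely_controllable_def Tr_def)
qed

lemma co_rel:
  assumes x: "x \<in> triples n" and r: "(x,y) \<in> gl_orbit_rel n"
  shows "completely_observable n y \<longleftrightarrow> completely_observable n x"
proof -
  have y: "y \<in> triples n" by (rule rel_triples[OF x r])
  have "completely_observable n y \<longleftrightarrow> completely_controllable n (Tr y)" by (rule co_Tr[OF y])
  also have "\<dots> \<longleftrightarrow> completely_controllable n (Tr x)" by (rule cc_rel[OF Tr_triples[OF x] Tr_rel[OF x r]])
  also have "\<dots> \<longleftrightarrow> completely_observable n x" by (rule co_Tr[OF x, symmetric])
  finally show ?thesis .
qed



definition NF :: "nat \<Rightarrow> 'a::field poly \<times> 'a poly \<Rightarrow> 'a mat \<times> 'a mat \<times> 'a mat" where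
  "NF n y = (pmat n (fst y) (monom 1 1), B0 n, prow n (snd y))"

definition beta :: "nat \<Rightarrow> 'a::field poly \<Rightarrow> 'a mat" where
  "beta n p = mat n 1 (\<lambda>(j,_). coeff (monom 1 n - p) j)"

lemma beta_carrier[simp]: "beta n p \<in> carrier_mat n 1" by (simp add: beta_def)

lemma xn_minus_MC:
  assumes p: "p \<in> MON n" shows "monom 1 n - p \<in> MC n"
  unfolding MC_def mem_Collect_eq
proof (intro allI impI)
  fix j assume j: "n \<le> j"
  show "coeff (monom 1 n - p) j = 0"
  proof (cases "j = n")
    case True
    from p have a: "lead_coeff p = 1" and b: "degree p = n" unfolding MON_def by auto
    have "coeff p n = 1" using a unfolding b .
    then show ?thesis using True by simp
  next
    case False
    then have "j > degree p" using j p by (simp add: MON_def)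
    then show ?thesis using False by (simp add: coeff_eq_0 coeff_monom)
  qed
qed

lemma NF_alpha:
  assumes p: "p \<in> MON n"
  shows "pmat n p (monom 1 1) ^\<^sub>m n * B0 n = ctrb_mat n (pmat n p (monom 1 1)) (B0 n) * beta n p"
proof (rule eq_matI)
  let ?K = "ctrb_mat n (pmat n p (monom 1 1)) (B0 n)"
  fix i j assume "i < dim_row (?K * beta n p)" "j < dim_col (?K * beta n p)"
  then have i: "i < n" and j: "j = 0" by (simp_all add: ctrb_mat_def beta_def)
  have "(pmat n p (monom 1 1) ^\<^sub>m n * B0 n) $$ (i,j) = (pmat n p (monom 1 n) * B0 n) $$ (i,0)"
    unfolding pmat_pow[OF p] j ..
  also have "\<dots> = coeff (monom 1 i * monom 1 n mod p) (n-1)" by (rule pmat_B0[OF i])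
  finally have L: "(pmat n p (monom 1 1) ^\<^sub>m n * B0 n) $$ (i,j) = coeff (monom 1 i * monom 1 n mod p) (n-1)" .
  have "(?K * beta n p) $$ (i,j) = (\<Sum>k\<in>{0..<n}. ?K $$ (i,k) * beta n p $$ (k,0))"
    using i j by (simp add: scalar_prod_def ctrb_mat_def beta_def)
  also have "\<dots> = (\<Sum>k\<in>{0..<n}. coeff (monom 1 n - p) k * coeff (monom 1 k * monom 1 i mod p) (n-1))"
  proof (rule sum.cong[OF refl])
    fix k assume "k \<in> {0..<n}"
    then have k: "k < n" by simp
    show "?K $$ (i,k) * beta n p $$ (k,0) = coeff (monom 1 n - p) k * coeff (monom 1 k * monom 1 i mod p) (n-1)"
      using ctrb_NF_entry[OF p i k] k by (simp add: beta_def mult.commute)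
  qed
  also have "\<dots> = coeff ((monom 1 n - p) * monom 1 i mod p) (n-1)"
    by (rule LIN[OF MC_coeff[OF xn_minus_MC[OF p]]])
  also have "(monom 1 n - p) * monom 1 i mod p = monom 1 i * monom 1 n mod p"
  proof -
    have e: "(monom 1 n - p) * monom 1 i = monom 1 i * monom 1 n + (- monom 1 i) * p"
      by (simp add: algebra_simps)
    show ?thesis unfolding e by (rule mod_mult_self1)
  qed
  finally show "(pmat n p (monom 1 1) ^\<^sub>m n * B0 n) $$ (i,j) = (?K * beta n p) $$ (i,j)" using L by simp
qed (simp_all add: ctrb_mat_def beta_def)

lemma NF_triples: "NF n y \<in> triples n"
  using B0_carrier[of n] prow_carrier[of n "snd y"] pmat_carrier by (simp add: NF_def triples_def)

lemma NF_cc: "y \<in> PP n \<Longrightarrow> completely_controllable n (NF n y)"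
  using K0_inv by (cases y) (auto simp: NF_def completely_controllable_def PP_def)

lemma NF_co: "y \<in> PP n \<Longrightarrow> completely_observable n (NF n y) \<longleftrightarrow> coprime (fst y) (snd y)"
  using obsv_NF_iff by (cases y) (auto simp: NF_def completely_observable_def PP_def)



lemma prow_inj:
  assumes c: "c \<in> MC n" and c': "c' \<in> MC n" and e: "prow n c = prow n c'"
  shows "c = c'"
proof (rule poly_eqI)
  fix j show "coeff c j = coeff c' j"
  proof (cases "j < n")
    case True
    have "prow n c $$ (0,j) = prow n c' $$ (0,j)" using e by simp
    then show ?thesis using True by (simp add: prow_def)
  next
    case False then show ?thesis using MC_coeff[OF c] MC_coeff[OF c'] by simp
  qed
qed

lemma NF_unique:
  assumes y: "y \<in> PP n" and y': "y' \<in> PP n" and r: "(NF n y, NF n y') \<in> gl_orbit_rel n"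
  shows "y = y'"
proof -
  obtain p c where yy: "y = (p,c)" by (cases y)
  obtain p' c' where yy': "y' = (p',c')" by (cases y')
  have p: "p \<in> MON n" and c: "c \<in> MC n" using y yy by (auto simp: PP_def)
  have p': "p' \<in> MON n" and c': "c' \<in> MC n" using y' yy' by (auto simp: PP_def)
  obtain g h where g: "g \<in> carrier_mat n n" and h: "h \<in> carrier_mat n n" and gh: "g*h = 1\<^sub>m n"
    and hg: "h*g = 1\<^sub>m n" and e: "NF n y' = act g h (NF n y)"
    using r unfolding rel_act by blast
  let ?A = "pmat n p (monom 1 1)"
  let ?A' = "pmat n p' (monom 1 1)"
  have eA: "?A' = g * ?A * h" and eB: "B0 n = g * B0 n" and eC: "prow n c' = prow n c * h"
    using e yy yy' by (simp_all add: NF_def act_def)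
  let ?K = "ctrb_mat n ?A (B0 n)"
  let ?K' = "ctrb_mat n ?A' (B0 n)"
  have Kc: "?K \<in> carrier_mat n n" "?K' \<in> carrier_mat n n" by (simp_all add: ctrb_mat_def)
  have "?K' = ctrb_mat n (g * ?A * h) (g * B0 n)" by (simp only: eA[symmetric] eB[symmetric])
  also have "\<dots> = g * ?K" by (rule ctrb_conj[OF g h pmat_carrier hg B0_carrier])
  finally have KK: "?K' = g * ?K" .
  have "?A' ^\<^sub>m n * B0 n = (g * ?A * h) ^\<^sub>m n * (g * B0 n)" by (simp only: eA[symmetric] eB[symmetric])
  also have "\<dots> = g * (?A ^\<^sub>m n * B0 n)" by (rule conj_pow[OF g h pmat_carrier hg B0_carrier])
  also have "\<dots> = g * (?K * beta n p)" by (simp only: NF_alpha[OF p])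
  also have "\<dots> = (g * ?K) * beta n p" using assoc_mult_mat[OF g Kc(1) beta_carrier[of n p]] by simp
  also have "\<dots> = ?K' * beta n p" using KK by simp
  finally have 1: "?A' ^\<^sub>m n * B0 n = ?K' * beta n p" .
  have 2: "?A' ^\<^sub>m n * B0 n = ?K' * beta n p'" by (rule NF_alpha[OF p'])
  obtain Ki where Ki: "Ki \<in> carrier_mat n n" "?K' * Ki = 1\<^sub>m n" "Ki * ?K' = 1\<^sub>m n"
    using inv_ex[OF Kc(2) K0_inv[OF p']] by blast
  have bK: "Ki * (?K' * beta n q) = beta n q" for q
  proof -
    have "Ki * (?K' * beta n q) = (Ki * ?K') * beta n q"
      using assoc_mult_mat[OF Ki(1) Kc(2) beta_carrier[of n q]] by simp
    also have "\<dots> = beta n q" using Ki(3) left_mult_one_mat[OF beta_carrier[of n q]] by simp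
    finally show ?thesis .
  qed
  have "beta n p = Ki * (?K' * beta n p)" using bK by simp
  also have "\<dots> = Ki * (?K' * beta n p')" using 1 2 by simp
  also have "\<dots> = beta n p'" using bK by simp
  finally have bb: "beta n p = beta n p'" .
  have "monom 1 n - p = monom 1 n - p'"
  proof (rule poly_eqI)
    fix j show "coeff (monom 1 n - p) j = coeff (monom 1 n - p') j"
    proof (cases "j < n")
      case True
      have "beta n p $$ (j,0) = beta n p' $$ (j,0)" using bb by simp
      then show ?thesis using True by (simp add: beta_def)
    next
      case False then show ?thesis
        using MC_coeff[OF xn_minus_MC[OF p]] MC_coeff[OF xn_minus_MC[OF p']] by simp
    qed
  qed
  then have pp: "p = p'" by simp
  then have gK: "g * ?K = ?K" using KK by simp
  obtain Ki0 where Ki0: "Ki0 \<in> carrier_mat n n" "?K * Ki0 = 1\<^sub>m n" "Ki0 * ?K = 1\<^sub>m n"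
    using inv_ex[OF Kc(1) K0_inv[OF p]] by blast
  have "g = g * (?K * Ki0)" using Ki0 g by simp
  also have "\<dots> = (g * ?K) * Ki0" using g Kc Ki0 by (simp add: assoc_mult_mat[of _ n n _ n _ n])
  also have "\<dots> = 1\<^sub>m n" using gK Ki0 by simp
  finally have g1: "g = 1\<^sub>m n" .
  then have h1: "h = 1\<^sub>m n" using gh h by simp
  then have "prow n c' = prow n c" using eC by simp
  then have cc: "c = c'" using prow_inj[OF c c'] by simp
  show ?thesis using yy yy' pp cc by simp
qed

lemma NF_exists:
  assumes x: "x \<in> triples n" and cc: "completely_controllable n x"
  shows "\<exists>y\<in>PP n. (x, NF n y) \<in> gl_orbit_rel n"
proof -
  obtain A B C where xx: "x = (A,B,C)" by (cases x)
  have A: "A \<in> carrier_mat n n" and B: "B \<in> carrier_mat n 1" and C: "C \<in> carrier_mat 1 n"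
    using x xx by (auto simp: triples_def)
  let ?K = "ctrb_mat n A B"
  have Kc: "?K \<in> carrier_mat n n" by (simp add: ctrb_mat_def)
  have Kinv: "invertible_mat ?K" using cc xx by (simp add: completely_controllable_def)
  obtain Ki where Ki: "Ki \<in> carrier_mat n n" "?K * Ki = 1\<^sub>m n" "Ki * ?K = 1\<^sub>m n"
    using inv_ex[OF Kc Kinv] by blast
  have AnB: "A ^\<^sub>m n * B \<in> carrier_mat n 1" by (rule mult_carrier_mat[OF pow_carrier_mat[OF A] B])
  define al where "al = Ki * (A ^\<^sub>m n * B)"
  have alc: "al \<in> carrier_mat n 1" unfolding al_def using Ki(1) AnB by simp
  have rel1: "A ^\<^sub>m n * B = ?K * al"
  proof -
    have "?K * al = (?K * Ki) * (A ^\<^sub>m n * B)" unfolding al_def using assoc_mult_mat[OF Kc Ki(1) AnB] by simp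
    also have "\<dots> = A ^\<^sub>m n * B" using Ki(2) left_mult_one_mat[OF AnB] by simp
    finally show ?thesis by simp
  qed
  define s where "s = (\<Sum>j\<in>{0..<n}. monom (al $$ (j,0)) j)"
  have cs: "coeff s j = (if j < n then al $$ (j,0) else 0)" for j by (simp add: s_def coeff_sum coeff_monom)
  define p where "p = monom 1 n - s"
  have sMC: "- s \<in> MC n" using cs by (simp add: MC_def)
  have "monom 1 n + (- s) \<in> MON n" unfolding MON_eq using sMC by (rule imageI)
  then have p: "p \<in> MON n" unfolding p_def by simp
  have bal: "beta n p = al"
  proof (rule eq_matI)
    fix i j assume "i < dim_row al" "j < dim_col al"
    then have i: "i < n" and j: "j = 0" using alc by auto
    show "beta n p $$ (i,j) = al $$ (i,j)" using i j by (simp add: beta_def p_def cs)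
  qed (use alc in \<open>simp_all add: beta_def\<close>)
  let ?AP = "pmat n p (monom 1 1)"
  let ?KP = "ctrb_mat n ?AP (B0 n)"
  have K0c: "?KP \<in> carrier_mat n n" by (simp add: ctrb_mat_def)
  obtain K0i where K0i: "K0i \<in> carrier_mat n n" "?KP * K0i = 1\<^sub>m n" "K0i * ?KP = 1\<^sub>m n"
    using inv_ex[OF K0c K0_inv[OF p]] by blast
  have rel0: "?AP ^\<^sub>m n * B0 n = ?KP * al" using NF_alpha[OF p] bal by simp
  have KC: "A * ?K = ?K * Comp n al" by (rule KComp[OF A B alc rel1])
  have KC0: "?AP * ?KP = ?KP * Comp n al" by (rule KComp[OF pmat_carrier B0_carrier alc rel0])
  have Cc: "Comp n al \<in> carrier_mat n n" by (simp add: Comp_def)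
  define g where "g = ?KP * Ki"
  define h where "h = ?K * K0i"
  have g: "g \<in> carrier_mat n n" unfolding g_def using K0c Ki(1) by simp
  have h: "h \<in> carrier_mat n n" unfolding h_def using Kc K0i(1) by simp
  have gh: "g * h = 1\<^sub>m n"
  proof -
    have "g * h = ?KP * ((Ki * ?K) * K0i)" unfolding g_def h_def
      using K0c Ki(1) Kc K0i(1) by (simp add: assoc_mult_mat[of _ n n _ n _ n])
    also have "\<dots> = 1\<^sub>m n" using Ki(3) K0i(2) K0i(1) by simp
    finally show ?thesis .
  qed
  have hg: "h * g = 1\<^sub>m n"
  proof -
    have "h * g = ?K * ((K0i * ?KP) * Ki)" unfolding g_def h_def
      using K0c Ki(1) Kc K0i(1) by (simp add: assoc_mult_mat[of _ n n _ n _ n])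
    also have "\<dots> = 1\<^sub>m n" using K0i(3) Ki(2) Ki(1) by simp
    finally show ?thesis .
  qed
  have gAh: "g * A * h = ?AP"
  proof -
    have "g * A * h = ?KP * ((Ki * (A * ?K)) * K0i)" unfolding g_def h_def
      using K0c Ki(1) Kc K0i(1) A by (simp add: assoc_mult_mat[of _ n n _ n _ n])
    also have "Ki * (A * ?K) = Comp n al"
    proof -
      have "Ki * (A * ?K) = (Ki * ?K) * Comp n al" unfolding KC
        using Ki(1) Kc Cc by (simp add: assoc_mult_mat[of _ n n _ n _ n])
      then show ?thesis using Ki(3) Cc by simp
    qed
    also have "?KP * (Comp n al * K0i) = (?KP * Comp n al) * K0i"
      using K0c Cc K0i(1) by (simp add: assoc_mult_mat[of _ n n _ n _ n])
    also have "\<dots> = ?AP * (?KP * K0i)" unfolding KC0[symmetric]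
      using K0c K0i(1) by (simp add: assoc_mult_mat[of _ n n _ n _ n])
    also have "\<dots> = ?AP" using K0i(2) by simp
    finally show ?thesis .
  qed
  have gB: "g * B = B0 n"
  proof -
    have e1: "?K * e0 n = B" using ctrb_e0[OF A B] by simp
    have "g * B = ?KP * (Ki * B)" unfolding g_def
      using assoc_mult_mat[OF K0c Ki(1) B] by simp
    also have "Ki * B = Ki * (?K * e0 n)" by (simp only: e1)
    also have "Ki * (?K * e0 n) = (Ki * ?K) * e0 n" using assoc_mult_mat[OF Ki(1) Kc e0_carrier] by simp
    also have "\<dots> = e0 n" using Ki(3) left_mult_one_mat[OF e0_carrier] by simp
    also have "?KP * e0 n = B0 n" by (rule ctrb_e0[OF pmat_carrier B0_carrier])
    finally show ?thesis .
  qed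
  define R where "R = C * h"
  have Rc: "R \<in> carrier_mat 1 n" unfolding R_def using C h by simp
  define c where "c = (\<Sum>j\<in>{0..<n}. monom (R $$ (0,j)) j)"
  have cc': "coeff c j = (if j < n then R $$ (0,j) else 0)" for j by (simp add: c_def coeff_sum coeff_monom)
  have cMC: "c \<in> MC n" using cc' by (simp add: MC_def)
  have prc: "prow n c = R"
  proof (rule eq_matI)
    fix i j assume "i < dim_row R" "j < dim_col R"
    then have i: "i = 0" and j: "j < n" using Rc by auto
    show "prow n c $$ (i,j) = R $$ (i,j)" using i j by (simp add: prow_def cc')
  qed (use Rc in auto)
  have e: "NF n (p,c) = act g h x"
    using xx gAh gB prc R_def by (simp add: act_def NF_def)
  have "(x, NF n (p,c)) \<in> gl_orbit_rel n" unfolding rel_act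
    by (rule exI[of _ g], rule exI[of _ h]) (use g h gh hg e in simp)
  moreover have "(p,c) \<in> PP n" using p cMC by (simp add: PP_def)
  ultimately show ?thesis by blast
qed



definition Rep :: "nat \<Rightarrow> ('a::field mat \<times> 'a mat \<times> 'a mat) set" where
  "Rep n = NF n ` PP n \<union> Tr ` NF n ` (PP n - CoP n)"

lemma NC_not_co: "y \<in> PP n - CoP n \<Longrightarrow> \<not> completely_observable n (NF n (y :: 'a::field poly \<times> 'a poly))"
  using NF_co[of y n] by (auto simp: CoP_def)

lemma Tr_NF_not_cc:
  assumes "y \<in> PP n - CoP n" shows "\<not> completely_controllable n (Tr (NF n (y :: 'a::field poly \<times> 'a poly)))"
  using NC_not_co[OF assms] co_Tr[OF NF_triples[of n y]] by simp

lemma Rep_sub: "Rep n \<subseteq> (cc_or_co n :: ('a::field mat \<times> 'a mat \<times> 'a mat) set)"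
proof
  fix z :: "'a mat \<times> 'a mat \<times> 'a mat" assume "z \<in> Rep n"
  then consider (a) y where "y \<in> PP n" "z = NF n y" | (b) y where "y \<in> PP n - CoP n" "z = Tr (NF n y)"
    unfolding Rep_def by blast
  then show "z \<in> cc_or_co n"
  proof cases
    case a then show ?thesis by (simp add: cc_or_co_def NF_triples NF_cc)
  next
    case b
    have "completely_observable n (Tr (NF n y))"
      using co_Tr[OF Tr_triples[OF NF_triples[of n y]]] NF_cc[of y n] b by (simp add: Tr_Tr)
    then show ?thesis using b Tr_triples[OF NF_triples] by (simp add: cc_or_co_def)
  qed
qed

lemma Rep_triples: "z \<in> Rep n \<Longrightarrow> z \<in> triples n"
  using Rep_sub by (auto simp: cc_or_co_def)

lemma Rep_cover:
  assumes x: "x \<in> (cc_or_co n :: ('a::field mat \<times> 'a mat \<times> 'a mat) set)"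
  shows "\<exists>y\<in>Rep n. (x,y) \<in> gl_orbit_rel n"
proof -
  have xt: "x \<in> triples n" using x by (simp add: cc_or_co_def)
  show ?thesis
  proof (cases "completely_controllable n x")
    case True
    then obtain y where "y \<in> PP n" "(x, NF n y) \<in> gl_orbit_rel n" using NF_exists[OF xt] by blast
    then show ?thesis unfolding Rep_def by blast
  next
    case False
    then have co: "completely_observable n x" using x by (simp add: cc_or_co_def)
    have Txt: "Tr x \<in> triples n" by (rule Tr_triples[OF xt])
    have "completely_controllable n (Tr x)" using co co_Tr[OF xt] by simp
    then obtain y where y: "y \<in> PP n" and r: "(Tr x, NF n y) \<in> gl_orbit_rel n" using NF_exists[OF Txt] by blast
    have r2: "(x, Tr (NF n y)) \<in> gl_orbit_rel n" using Tr_rel[OF Txt r] by (simp add: Tr_Tr)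
    have "completely_observable n (NF n y) \<longleftrightarrow> completely_observable n (Tr x)" by (rule co_rel[OF Txt r])
    also have "\<dots> \<longleftrightarrow> completely_controllable n x" using co_Tr[OF Txt] by (simp add: Tr_Tr)
    finally have "\<not> completely_observable n (NF n y)" using False by simp
    then have "y \<in> PP n - CoP n" using y NF_co[OF y] by (simp add: CoP_def)
    then show ?thesis using r2 unfolding Rep_def by blast
  qed
qed

lemma Rep_unique:
  assumes y1: "y1 \<in> Rep n" and y2: "y2 \<in> Rep n" and r: "(y1, y2) \<in> gl_orbit_rel n"
  shows "y1 = (y2 :: 'a::field mat \<times> 'a mat \<times> 'a mat)"
proof -
  have t1: "y1 \<in> triples n" using Rep_triples[OF y1] .
  consider (a) a where "a \<in> PP n" "y1 = NF n a" | (b) a where "a \<in> PP n - CoP n" "y1 = Tr (NF n a)"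
    using y1 unfolding Rep_def by blast
  then show ?thesis
  proof cases
    case a
    consider (aa) b where "b \<in> PP n" "y2 = NF n b" | (ab) b where "b \<in> PP n - CoP n" "y2 = Tr (NF n b)"
      using y2 unfolding Rep_def by blast
    then show ?thesis
    proof cases
      case aa then show ?thesis using a r NF_unique by blast
    next
      case ab
      have "completely_controllable n y2" using cc_rel[OF t1 r] a NF_cc[of a n] by simp
      then show ?thesis using ab Tr_NF_not_cc by blast
    qed
  next
    case b
    consider (ba) b where "b \<in> PP n" "y2 = NF n b" | (bb) b where "b \<in> PP n - CoP n" "y2 = Tr (NF n b)"
      using y2 unfolding Rep_def by blast
    then show ?thesis
    proof cases
      case ba
      have "completely_controllable n y1" using cc_rel[OF t1 r] ba NF_cc[of b n] by simp
      then show ?thesis using b Tr_NF_not_cc by blast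
    next
      case bb
      have "(Tr y1, Tr y2) \<in> gl_orbit_rel n" by (rule Tr_rel[OF t1 r])
      then have "(NF n a, NF n b) \<in> gl_orbit_rel n" using b bb by (simp add: Tr_Tr)
      then have "a = b" using NF_unique b bb by blast
      then show ?thesis using b bb by simp
    qed
  qed
qed

lemma card_quot: "card ((cc_or_co n :: ('a::field mat \<times> 'a mat \<times> 'a mat) set) // gl_orbit_rel n) = card (Rep n :: ('a mat \<times> 'a mat \<times> 'a mat) set)"
proof -
  let ?f = "\<lambda>y. gl_orbit_rel n `` {y}"
  have "bij_betw ?f (Rep n) ((cc_or_co n :: ('a mat \<times> 'a mat \<times> 'a mat) set) // gl_orbit_rel n)"
    unfolding bij_betw_def
  proof
    show "inj_on ?f (Rep n :: ('a mat \<times> 'a mat \<times> 'a mat) set)"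
    proof (rule inj_onI)
      fix y1 y2 :: "'a mat \<times> 'a mat \<times> 'a mat"
      assume y1: "y1 \<in> Rep n" and y2: "y2 \<in> Rep n" and e: "?f y1 = ?f y2"
      have "(y2,y2) \<in> gl_orbit_rel n" by (rule rel_refl[OF Rep_triples[OF y2]])
      then have "y2 \<in> ?f y1" using e by simp
      then have "(y1,y2) \<in> gl_orbit_rel n" by simp
      then show "y1 = y2" by (rule Rep_unique[OF y1 y2])
    qed
    show "?f ` (Rep n :: ('a mat \<times> 'a mat \<times> 'a mat) set) = (cc_or_co n :: ('a mat \<times> 'a mat \<times> 'a mat) set) // gl_orbit_rel n"
    proof (rule subset_antisym)
      show "?f ` (Rep n :: ('a mat \<times> 'a mat \<times> 'a mat) set) \<subseteq> (cc_or_co n :: ('a mat \<times> 'a mat \<times> 'a mat) set) // gl_orbit_rel n"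
        using Rep_sub by (auto intro: quotientI)
      show "(cc_or_co n :: ('a mat \<times> 'a mat \<times> 'a mat) set) // gl_orbit_rel n \<subseteq> ?f ` (Rep n :: ('a mat \<times> 'a mat \<times> 'a mat) set)"
      proof
        fix X assume "X \<in> (cc_or_co n :: ('a mat \<times> 'a mat \<times> 'a mat) set) // gl_orbit_rel n"
        then obtain x where x: "x \<in> cc_or_co n" and X: "X = ?f x" by (auto elim: quotientE)
        obtain y where y: "y \<in> Rep n" and r: "(x,y) \<in> gl_orbit_rel n" using Rep_cover[OF x] by blast
        have "X = ?f y" using X class_eq[OF _ r] x by (simp add: cc_or_co_def)
        then show "X \<in> ?f ` Rep n" using y by blast
      qed
    qed
  qed
  then show ?thesis by (simp add: bij_betw_same_card)
qed

lemma NF_inj: "inj_on (NF n) (PP n :: ('a::field poly \<times> 'a poly) set)"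
proof (rule inj_onI)
  fix a b :: "'a poly \<times> 'a poly" assume a: "a \<in> PP n" and b: "b \<in> PP n" and e: "NF n a = NF n b"
  have "(NF n a, NF n b) \<in> gl_orbit_rel n" using rel_refl[OF NF_triples, of n a] e by simp
  then show "a = b" by (rule NF_unique[OF a b])
qed

lemma card_Rep:
  "card (Rep n :: ('a::{field,finite} mat \<times> 'a mat \<times> 'a mat) set)
     = card (UNIV :: 'a set) ^ (2*n) + card ((PP n - CoP n) :: ('a poly \<times> 'a poly) set)"
proof -
  have fin: "finite (PP n :: ('a poly \<times> 'a poly) set)" using card_PP by blast
  have fin2: "finite ((PP n - CoP n) :: ('a poly \<times> 'a poly) set)" using fin by simp
  have injT: "inj (Tr :: 'a mat \<times> 'a mat \<times> 'a mat \<Rightarrow> _)" by (metis Tr_Tr injI)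
  have c1: "card (NF n ` (PP n :: ('a poly \<times> 'a poly) set)) = card (UNIV :: 'a set) ^ (2*n)"
    using card_image[OF NF_inj[of n, where 'a='a]] card_PP[of n, where 'a='a] by simp
  have injNC: "inj_on (NF n) ((PP n - CoP n) :: ('a poly \<times> 'a poly) set)"
    using NF_inj by (rule inj_on_subset) blast
  have c2: "card (Tr ` NF n ` ((PP n - CoP n) :: ('a poly \<times> 'a poly) set)) = card ((PP n - CoP n) :: ('a poly \<times> 'a poly) set)"
    using card_image[OF injNC] card_image[OF inj_on_subset[OF injT subset_UNIV]] by simp
  have disj: "NF n ` (PP n :: ('a poly \<times> 'a poly) set) \<inter> Tr ` NF n ` (PP n - CoP n) = {}"
    using NF_cc Tr_NF_not_cc by fastforce
  show ?thesis unfolding Rep_def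
    using card_Un_disjoint[OF finite_imageI[OF fin] finite_imageI[OF finite_imageI[OF fin2]] disj] c1 c2 by simp
qed

lemma num_orbits_formula:
  "num_orbits (F :: 'a::{field,finite} itself) n = card (UNIV :: 'a set) ^ (2*n) + (if n = 0 then 0 else card (UNIV :: 'a set) ^ (2*n - 1))"
  unfolding num_orbits_def card_quot card_Rep card_nonCoP by simp


theorem mainTheorem3:
  fixes F :: "'a::{field,finite} itself"
  shows "num_orbits F 0 = 1
    \<and> (\<forall>n\<ge>1. num_orbits F n = card (UNIV :: 'a set) ^ (2*n) + card (UNIV :: 'a set) ^ (2*n - 1))
    \<and> (\<forall>N. (\<Sum>n\<le>N. num_orbits F n) = (\<Sum>k\<le>2*N. card (UNIV :: 'a set) ^ k))"
proof -
  let ?q = "card (UNIV :: 'a set)"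
  have f: "num_orbits F n = ?q ^ (2*n) + (if n = 0 then 0 else ?q ^ (2*n - 1))" for n
    by (rule num_orbits_formula)
  have A: "num_orbits F 0 = 1" using f[of 0] by simp
  have B: "\<forall>n\<ge>1. num_orbits F n = ?q ^ (2*n) + ?q ^ (2*n - 1)" using f by simp
  have C: "(\<Sum>n\<le>N. num_orbits F n) = (\<Sum>k\<le>2*N. ?q ^ k)" for N
  proof (induction N)
    case 0 then show ?case using A by simp
  next
    case (Suc N)
    have "(\<Sum>n\<le>Suc N. num_orbits F n) = (\<Sum>n\<le>N. num_orbits F n) + num_orbits F (Suc N)" by simp
    also have "\<dots> = (\<Sum>k\<le>2*N. ?q ^ k) + (?q ^ Suc (2*N) + ?q ^ Suc (Suc (2*N)))"
      using Suc f[of "Suc N"] by simp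
    also have "\<dots> = (\<Sum>k\<le>Suc (Suc (2*N)). ?q ^ k)" by simp
    also have "Suc (Suc (2*N)) = 2 * Suc N" by simp
    finally show ?case .
  qed
  show ?thesis using A B C by blast
qed

end
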